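(* For every two-player game $G$ with question sets of sizes $\textsc x,\textsc y$ and answer sets of sizes $\textsc a,\textsc b$: (1) $\omega^*(G)\le\min\{\textsc x,\textsc y\}\,\omega(G)$; (2) $\omega^*(G)\le K_G^{\mathbb C}\sqrt{\textsc a\textsc b}\,\omega(G)$, where $K_G^{\mathbb C}$ is the complex Grothendieck constant.
   Context: A two-player game has coefficients $G_{x,y}^{a,b}=\pi(x,y)V(a,b,x,y)\ge0$. $\omega(G)$ is the supremum of $|\sum G_{x,y}^{a,b}P(a,b|x,y)|$ over the convex hull of product conditional distributions $P_1(a|x)P_2(b|y)$. $\omega^*(G)$ is the supremum of $|\sum G_{x,y}^{a,b}\langle\psi|A_x^a\otimes B_y^b|\psi\rangle|$ over all $d$, unit $|\psi\rangle\in\mathbb C^d\otimes\mathbb C^d$ and POVMs $\{A_x^a\}_a,\{B_y^b\}_b$ in $M_d$ (positive semidefinite, summing to identity). $K_G^{\mathbb C}$ is the smallest constant such that for all $n,m$ and $C\in\mathbb C^{n\times m}$, $\sup_{d;\,a_x,b_y\in\mathrm{Ball}(\mathbb C^d)}|\sum c_{xy}\,a_x\cdot b_y|\le K\sup_{|s_x|,|t_y|\le1}|\sum c_{xy}s_xt_y|$. *)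

theory Defs
  imports "HOL-Analysis.Analysis"
begin

definition cond_dist :: "('x \<Rightarrow> 'a::finite \<Rightarrow> real) \<Rightarrow> bool" where
  "cond_dist P \<longleftrightarrow> (\<forall>x a. 0 \<le> P x a) \<and> (\<forall>x. (\<Sum>a\<in>UNIV. P x a) = 1)"

text \<open>Convex hull of product conditional distributions P1(a|x) P2(b|y), written out as
  finite convex combinations (function spaces carry no real_vector instance).\<close>
definition classical_corr ::
  "('x \<Rightarrow> 'y \<Rightarrow> 'a::finite \<Rightarrow> 'b::finite \<Rightarrow> real) set" where
  "classical_corr = {P. \<exists>(k::nat) (lam::nat \<Rightarrow> real) P1 P2.
      (\<forall>i<k. 0 \<le> lam i) \<and> (\<Sum>i<k. lam i) = 1 \<and>
      (\<forall>i<k. cond_dist (P1 i) \<and> cond_dist (P2 i)) \<and>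
      P = (\<lambda>x y a b. \<Sum>i<k. lam i * P1 i x a * P2 i y b)}"

definition classical_value ::
  "('x::finite \<Rightarrow> 'y::finite \<Rightarrow> 'a::finite \<Rightarrow> 'b::finite \<Rightarrow> real) \<Rightarrow> real" where
  "classical_value G = Sup ((\<lambda>P. \<bar>\<Sum>x\<in>UNIV. \<Sum>y\<in>UNIV. \<Sum>a\<in>UNIV. \<Sum>b\<in>UNIV.
        G x y a b * P x y a b\<bar>) ` classical_corr)"

text \<open>d x d complex matrices are functions nat => nat => complex, used on indices < d.
  Positive semidefinite: the quadratic form v* M v is a nonnegative real for all v in C^d.\<close>
definition psd :: "nat \<Rightarrow> (nat \<Rightarrow> nat \<Rightarrow> complex) \<Rightarrow> bool" where
  "psd d M \<longleftrightarrow> (\<forall>v::nat \<Rightarrow> complex.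
     (\<Sum>i<d. \<Sum>j<d. cnj (v i) * M i j * v j) \<in> \<real> \<and>
     0 \<le> Re (\<Sum>i<d. \<Sum>j<d. cnj (v i) * M i j * v j))"

definition povm :: "nat \<Rightarrow> ('a::finite \<Rightarrow> nat \<Rightarrow> nat \<Rightarrow> complex) \<Rightarrow> bool" where
  "povm d A \<longleftrightarrow> (\<forall>a. psd d (A a)) \<and>
     (\<forall>i<d. \<forall>j<d. (\<Sum>a\<in>UNIV. A a i j) = (if i = j then 1 else 0))"

text \<open>Vectors of C^d \<otimes> C^d are functions nat => nat => complex on indices < d
  (psi i j is the coefficient of e_i \<otimes> e_j).\<close>
definition unit_bipartite :: "nat \<Rightarrow> (nat \<Rightarrow> nat \<Rightarrow> complex) \<Rightarrow> bool" where
  "unit_bipartite d psi \<longleftrightarrow> (\<Sum>i<d. \<Sum>j<d. (cmod (psi i j))\<^sup>2) = 1"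

text \<open>\<langle>psi| A \<otimes> B |psi\<rangle>, where (A \<otimes> B)_{(i,j),(k,l)} = A_{ik} B_{jl}.\<close>
definition tensor_expect ::
  "nat \<Rightarrow> (nat \<Rightarrow> nat \<Rightarrow> complex) \<Rightarrow> (nat \<Rightarrow> nat \<Rightarrow> complex) \<Rightarrow> (nat \<Rightarrow> nat \<Rightarrow> complex) \<Rightarrow> complex" where
  "tensor_expect d psi A B =
     (\<Sum>i<d. \<Sum>j<d. \<Sum>k<d. \<Sum>l<d. cnj (psi i j) * A i k * B j l * psi k l)"

definition quantum_value ::
  "('x::finite \<Rightarrow> 'y::finite \<Rightarrow> 'a::finite \<Rightarrow> 'b::finite \<Rightarrow> real) \<Rightarrow> real" where
  "quantum_value G = Sup {cmod (\<Sum>x\<in>UNIV. \<Sum>y\<in>UNIV. \<Sum>a\<in>UNIV. \<Sum>b\<in>UNIV.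
        complex_of_real (G x y a b) * tensor_expect d psi (A x a) (B y b)) | d psi
        (A :: 'x \<Rightarrow> 'a \<Rightarrow> nat \<Rightarrow> nat \<Rightarrow> complex) (B :: 'y \<Rightarrow> 'b \<Rightarrow> nat \<Rightarrow> nat \<Rightarrow> complex).
        unit_bipartite d psi \<and> (\<forall>x. povm d (A x)) \<and> (\<forall>y. povm d (B y))}"

text \<open>K satisfies the complex Grothendieck inequality: for all n, m, C in C^(n x m),
  the sup over d and vectors a_x, b_y in the unit ball of C^d of |sum c_xy a_x . b_y|
  is at most K times the sup over |s_x|, |t_y| \<le> 1 of |sum c_xy s_x t_y|.
  (The sup on the left is written pointwise.)\<close>
definition groth_ineq_C :: "real \<Rightarrow> bool" where
  "groth_ineq_C K \<longleftrightarrow> (\<forall>(n::nat) (m::nat) (c::nat \<Rightarrow> nat \<Rightarrow> complex) (d::nat)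
      (a::nat \<Rightarrow> nat \<Rightarrow> complex) (b::nat \<Rightarrow> nat \<Rightarrow> complex).
     (\<forall>x<n. (\<Sum>i<d. (cmod (a x i))\<^sup>2) \<le> 1) \<longrightarrow> (\<forall>y<m. (\<Sum>i<d. (cmod (b y i))\<^sup>2) \<le> 1) \<longrightarrow>
     cmod (\<Sum>x<n. \<Sum>y<m. c x y * (\<Sum>i<d. a x i * b y i))
       \<le> K * Sup {cmod (\<Sum>x<n. \<Sum>y<m. c x y * s x * t y) | s t.
                   (\<forall>x<n. cmod (s x) \<le> 1) \<and> (\<forall>y<m. cmod (t y) \<le> 1)})"

definition grothendieck_C :: real where
  "grothendieck_C = Inf {K. groth_ineq_C K}"

end

theory Submission
  imports Defs
begin

definition qf :: "nat \<Rightarrow> (nat \<Rightarrow> nat \<Rightarrow> complex) \<Rightarrow> (nat \<Rightarrow> complex) \<Rightarrow> (nat \<Rightarrow> complex) \<Rightarrow> complex" where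
  "qf d M v w = (\<Sum>i<d. \<Sum>j<d. cnj (v i) * M i j * w j)"

lemma psdD: "psd d M \<Longrightarrow> qf d M v v \<in> \<real> \<and> 0 \<le> Re (qf d M v v)"
  unfolding psd_def qf_def by blast

lemma sum_two_supp:
  fixes f :: "nat \<Rightarrow> 'b::comm_monoid_add"
  assumes "i < d" "j < d" "i \<noteq> j" "\<And>k. k \<noteq> i \<Longrightarrow> k \<noteq> j \<Longrightarrow> f k = 0"
  shows "(\<Sum>k<d. f k) = f i + f j"
proof -
  have "(\<Sum>k<d. f k) = (\<Sum>k\<in>{i,j}. f k)"
    by (rule sum.mono_neutral_right) (use assms in auto)
  then show ?thesis using assms by simp
qed

lemma sum_one_supp:
  fixes f :: "nat \<Rightarrow> 'b::comm_monoid_add"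
  assumes "i < d" "\<And>k. k \<noteq> i \<Longrightarrow> f k = 0"
  shows "(\<Sum>k<d. f k) = f i"
proof -
  have "(\<Sum>k<d. f k) = (\<Sum>k\<in>{i}. f k)"
    by (rule sum.mono_neutral_right) (use assms in auto)
  then show ?thesis using assms by simp
qed

lemma qf_two:
  assumes "i < d" "j < d" "i \<noteq> j"
  shows "qf d M (\<lambda>k. if k = i then p else if k = j then q else 0) (\<lambda>k. if k = i then p else if k = j then q else 0)
     = cnj p * M i i * p + cnj p * M i j * q + cnj q * M j i * p + cnj q * M j j * q"
proof -
  let ?v = "\<lambda>k. if k = i then p else if k = j then q else 0"
  have ji: "j \<noteq> i" using assms(3) by auto
  have in1: "\<And>k. (\<Sum>l<d. cnj (?v k) * M k l * ?v l) = cnj (?v k) * M k i * p + cnj (?v k) * M k j * q"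
    by (subst sum_two_supp[OF assms]) (use ji in auto)
  have "qf d M ?v ?v = (\<Sum>k<d. cnj (?v k) * M k i * p + cnj (?v k) * M k j * q)"
    unfolding qf_def using in1 by simp
  also have "\<dots> = cnj p * M i i * p + cnj p * M i j * q + (cnj q * M j i * p + cnj q * M j j * q)"
    by (subst sum_two_supp[OF assms]) (use ji in auto)
  finally show ?thesis by (simp add: algebra_simps)
qed

lemma qf_one:
  assumes "i < d"
  shows "qf d M (\<lambda>k. if k = i then 1 else 0) (\<lambda>k. if k = i then 1 else 0) = M i i"
proof -
  let ?v = "\<lambda>k. if k = i then (1::complex) else 0"
  have in1: "\<And>k. (\<Sum>l<d. cnj (?v k) * M k l * ?v l) = cnj (?v k) * M k i"
    by (subst sum_one_supp[OF assms]) auto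
  have "qf d M ?v ?v = (\<Sum>k<d. cnj (?v k) * M k i)"
    unfolding qf_def using in1 by simp
  also have "\<dots> = M i i"
    by (subst sum_one_supp[OF assms]) auto
  finally show ?thesis .
qed

lemma psd_diag: "psd d M \<Longrightarrow> i < d \<Longrightarrow> M i i \<in> \<real> \<and> 0 \<le> Re (M i i)"
  using psdD[of d M "\<lambda>k. if k = i then 1 else 0"] qf_one[of i d M] by simp

lemma psd_herm:
  assumes "psd d M" "i < d" "j < d"
  shows "M j i = cnj (M i j)"
proof (cases "i = j")
  case True
  then show ?thesis using psd_diag[OF assms(1) assms(2)] by (simp add: Reals_cnj_iff)
next
  case False
  have di: "Im (M i i) = 0" "Im (M j j) = 0"
    using psd_diag[OF assms(1) assms(2)] psd_diag[OF assms(1) assms(3)] by (auto simp: complex_is_Real_iff)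
  have 1: "Im (qf d M (\<lambda>k. if k = i then 1 else if k = j then 1 else 0) (\<lambda>k. if k = i then 1 else if k = j then 1 else 0)) = 0"
    using psdD[OF assms(1)] by (auto simp: complex_is_Real_iff)
  have 2: "Im (qf d M (\<lambda>k. if k = i then 1 else if k = j then \<i> else 0) (\<lambda>k. if k = i then 1 else if k = j then \<i> else 0)) = 0"
    using psdD[OF assms(1)] by (auto simp: complex_is_Real_iff)
  from 1 2 di show ?thesis
    unfolding qf_two[OF assms(2,3) False]
    by (intro complex_eqI) (auto simp: algebra_simps)
qed

lemma qf_Suc: "qf (Suc d) M v w = qf d M v w + (\<Sum>i<d. cnj (v i) * M i d) * w d
   + cnj (v d) * (\<Sum>j<d. M d j * w j) + cnj (v d) * M d d * w d"
  unfolding qf_def by (simp add: sum.distrib sum_distrib_left sum_distrib_right algebra_simps)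

lemma qf_cong: "(\<And>i. i < d \<Longrightarrow> v i = v' i) \<Longrightarrow> (\<And>i. i < d \<Longrightarrow> w i = w' i) \<Longrightarrow>
   (\<And>i j. i < d \<Longrightarrow> j < d \<Longrightarrow> M i j = M' i j) \<Longrightarrow> qf d M v w = qf d M' v' w'"
  unfolding qf_def by (intro sum.cong) auto

lemma psd_iff_qf: "psd d M \<longleftrightarrow> (\<forall>v. qf d M v v \<in> \<real> \<and> 0 \<le> Re (qf d M v v))"
  unfolding psd_def qf_def by simp

lemma psd_restrict: assumes "psd (Suc d) M" shows "psd d M"
  unfolding psd_iff_qf
proof
  fix v
  define w :: "nat \<Rightarrow> complex" where "w = (\<lambda>k. if k < d then v k else 0)"
  have "qf (Suc d) M w w = qf d M v v"
    unfolding qf_Suc by (simp add: w_def cong: qf_cong)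
  then show "qf d M v v \<in> \<real> \<and> 0 \<le> Re (qf d M v v)"
    using psdD[OF assms, of w] by simp
qed

lemma psd_row_zero:
  assumes "psd (Suc d) M" "M d d = 0" "j < d"
  shows "M d j = 0"
proof (rule ccontr)
  assume nz: "M d j \<noteq> 0"
  let ?z = "M d j"
  define k where "k = (Re (M j j) + 1) / (2 * (cmod ?z)\<^sup>2)"
  have kp: "2 * k * (cmod ?z)\<^sup>2 = Re (M j j) + 1" using nz unfolding k_def by simp
  let ?t = "- of_real k * ?z"
  have h: "M j d = cnj ?z" using psd_herm[OF assms(1), of d j] assms(3) by simp
  have "qf (Suc d) M (\<lambda>l. if l = d then ?t else if l = j then 1 else 0) (\<lambda>l. if l = d then ?t else if l = j then 1 else 0)
     = cnj ?t * M d d * ?t + cnj ?t * M d j * 1 + cnj 1 * M j d * ?t + cnj 1 * M j j * 1"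
    by (rule qf_two) (use assms(3) in auto)
  also have "\<dots> = M j j - of_real (2 * k) * (?z * cnj ?z)"
    using assms(2) h by (simp add: algebra_simps)
  also have "\<dots> = M j j - of_real (2 * k * (cmod ?z)\<^sup>2)"
    by (simp only: of_real_mult complex_norm_square)
  finally have e: "Re (qf (Suc d) M (\<lambda>l. if l = d then ?t else if l = j then 1 else 0) (\<lambda>l. if l = d then ?t else if l = j then 1 else 0)) = Re (M j j) - 2 * k * (cmod ?z)\<^sup>2"
    by simp
  have "0 \<le> Re (M j j) - 2 * k * (cmod ?z)\<^sup>2"
    using psdD[OF assms(1), of "(\<lambda>l. if l = d then ?t else if l = j then 1 else 0)"] e by linarith
  with kp show False by simp
qed

lemma qf_schur: "qf d (\<lambda>i j. M i j - M i d * M d j / c) v v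
   = qf d M v v - (\<Sum>i<d. cnj (v i) * M i d) * (\<Sum>j<d. M d j * v j) / c"
proof -
  have "qf d (\<lambda>i j. M i j - M i d * M d j / c) v v
      = qf d M v v - (\<Sum>i<d. \<Sum>j<d. (cnj (v i) * M i d) * (M d j * v j)) / c"
    unfolding qf_def
    by (simp add: algebra_simps sum_subtractf sum_divide_distrib)
  then show ?thesis by (simp add: sum_product)
qed

lemma psd_schur:
  assumes "psd (Suc d) M" "0 < Re (M d d)"
  shows "psd d (\<lambda>i j. M i j - M i d * M d j / M d d)"
  unfolding psd_iff_qf
proof
  fix v
  define b where "b = M d d"
  have breal: "b = of_real (Re (M d d))" using psd_diag[OF assms(1), of d] unfolding b_def
    by (simp add: complex_is_Real_iff complex_eq_iff)
  have bnz: "b \<noteq> 0" using assms(2) b_def by auto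
  define s where "s = (\<Sum>l<d. M d l * v l)"
  define w :: "nat \<Rightarrow> complex" where "w = (\<lambda>k. if k < d then v k else - (s / b))"
  have herm: "\<And>i. i < d \<Longrightarrow> M i d = cnj (M d i)" by (rule psd_herm[OF assms(1)]) auto
  have hs: "(\<Sum>i<d. cnj (w i) * M i d) = cnj s"
    unfolding s_def w_def by (simp add: herm cnj_sum mult.commute)
  have hs2: "(\<Sum>i<d. cnj (v i) * M i d) = cnj s"
    unfolding s_def by (simp add: herm cnj_sum mult.commute)
  have hs3: "(\<Sum>j<d. M d j * w j) = s" unfolding s_def w_def by simp
  have cb: "cnj b = b" using breal by simp
  have "qf (Suc d) M w w = qf d M v v + cnj s * w d + cnj (w d) * s + cnj (w d) * b * w d"
    unfolding qf_Suc hs hs3 b_def by (simp add: w_def cong: qf_cong)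
  also have "\<dots> = qf d M v v - cnj s * s / b"
    using bnz cb by (simp add: w_def field_simps)
  also have "\<dots> = qf d (\<lambda>i j. M i j - M i d * M d j / M d d) v v"
    unfolding qf_schur hs2 b_def s_def by simp
  finally show "qf d (\<lambda>i j. M i j - M i d * M d j / M d d) v v \<in> \<real> \<and> 0 \<le> Re (qf d (\<lambda>i j. M i j - M i d * M d j / M d d) v v)"
    using psdD[OF assms(1), of w] by simp
qed

lemma cholesky:
  "psd d M \<Longrightarrow> \<exists>C. \<forall>i<d. \<forall>j<d. M i j = (\<Sum>r<d. cnj (C r i) * C r j)"
proof (induction d arbitrary: M)
  case 0
  then show ?case by simp
next
  case (Suc d)
  have diag: "M d d \<in> \<real>" "0 \<le> Re (M d d)" using psd_diag[OF Suc.prems, of d] by auto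
  have herm: "\<And>i. i < Suc d \<Longrightarrow> M i d = cnj (M d i)" by (rule psd_herm[OF Suc.prems]) auto
  show ?case
  proof (cases "Re (M d d) = 0")
    case True
    then have z: "M d d = 0" using diag by (simp add: complex_eq_iff complex_is_Real_iff)
    have row: "\<And>j. j < Suc d \<Longrightarrow> M d j = 0"
      using psd_row_zero[OF Suc.prems z] z by (metis less_Suc_eq)
    have col: "\<And>j. j < Suc d \<Longrightarrow> M j d = 0" using row herm by (metis complex_cnj_zero)
    obtain C where C: "\<forall>i<d. \<forall>j<d. M i j = (\<Sum>r<d. cnj (C r i) * C r j)"
      using Suc.IH[OF psd_restrict[OF Suc.prems]] by blast
    define C' where "C' = (\<lambda>r j. if r < d \<and> j < d then C r j else 0)"
    have "\<forall>i<Suc d. \<forall>j<Suc d. M i j = (\<Sum>r<Suc d. cnj (C' r i) * C' r j)"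
    proof (intro allI impI)
      fix i j assume ij: "i < Suc d" "j < Suc d"
      show "M i j = (\<Sum>r<Suc d. cnj (C' r i) * C' r j)"
      proof (cases "i = d \<or> j = d")
        case True
        then show ?thesis using row col ij by (auto simp: C'_def)
      next
        case False
        then have "i < d" "j < d" using ij by auto
        then show ?thesis using C by (simp add: C'_def)
      qed
    qed
    then show ?thesis by blast
  next
    case False
    then have bpos: "0 < Re (M d d)" using diag by simp
    define b where "b = Re (M d d)"
    have Mb: "M d d = of_real b" using diag unfolding b_def by (simp add: complex_eq_iff complex_is_Real_iff)
    obtain C where C: "\<forall>i<d. \<forall>j<d. M i j - M i d * M d j / M d d = (\<Sum>r<d. cnj (C r i) * C r j)"
      using Suc.IH[OF psd_schur[OF Suc.prems bpos]] by blast
    define C' where "C' = (\<lambda>r j. if r < d then (if j < d then C r j else 0) else M d j / of_real (sqrt b))"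
    have sb: "of_real (sqrt b) * of_real (sqrt b) = (of_real b :: complex)"
    proof -
      have "sqrt b * sqrt b = b" using bpos unfolding b_def by simp
      then show ?thesis by (metis of_real_mult)
    qed
    have Mnz: "M d d \<noteq> 0" using bpos by auto
    have key: "\<And>i j. i < Suc d \<Longrightarrow> j < Suc d \<Longrightarrow> cnj (C' d i) * C' d j = M i d * M d j / M d d"
    proof -
      fix i j assume "i < Suc d" "j < Suc d"
      have "cnj (C' d i) * C' d j = cnj (M d i) * M d j / (of_real (sqrt b) * of_real (sqrt b))"
        by (simp add: C'_def)
      also have "\<dots> = M i d * M d j / M d d" using herm[OF \<open>i < Suc d\<close>] sb Mb by simp
      finally show "cnj (C' d i) * C' d j = M i d * M d j / M d d" .
    qed
    have "\<forall>i<Suc d. \<forall>j<Suc d. M i j = (\<Sum>r<Suc d. cnj (C' r i) * C' r j)"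
    proof (intro allI impI)
      fix i j assume ij: "i < Suc d" "j < Suc d"
      have s: "(\<Sum>r<Suc d. cnj (C' r i) * C' r j) = (\<Sum>r<d. cnj (C' r i) * C' r j) + M i d * M d j / M d d"
        using key[OF ij] by simp
      show "M i j = (\<Sum>r<Suc d. cnj (C' r i) * C' r j)"
      proof (cases "i < d \<and> j < d")
        case True
        then have "(\<Sum>r<d. cnj (C' r i) * C' r j) = M i j - M i d * M d j / M d d"
          using C by (simp add: C'_def)
        then show ?thesis using s by simp
      next
        case False
        then have "(\<Sum>r<d. cnj (C' r i) * C' r j) = 0" by (auto simp: C'_def)
        moreover have "M i j = M i d * M d j / M d d"
        proof (cases "i = d")
          case True
          then show ?thesis using Mnz by simp
        next
          case False
          then have "j = d" using \<open>\<not> (i < d \<and> j < d)\<close> ij by auto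
          then show ?thesis using Mnz herm[of i] ij by simp
        qed
        ultimately show ?thesis using s by simp
      qed
    qed
    then show ?thesis by blast
  qed
qed

lemma te_as_qf:
  assumes B: "\<forall>j<d. \<forall>l<d. B j l = (\<Sum>r<d. cnj (C r j) * C r l)"
  shows "tensor_expect d psi A B = (\<Sum>r<d. qf d A (\<lambda>i. \<Sum>j<d. C r j * psi i j) (\<lambda>i. \<Sum>j<d. C r j * psi i j))"
proof -
  let ?T = "\<lambda>i j k l r. cnj (psi i j) * cnj (C r j) * A i k * C r l * psi k l"
  have "tensor_expect d psi A B = (\<Sum>i<d. \<Sum>j<d. \<Sum>k<d. \<Sum>l<d. \<Sum>r<d. ?T i j k l r)"
    unfolding tensor_expect_def using B by (simp add: sum_distrib_left sum_distrib_right algebra_simps)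
  also have "\<dots> = (\<Sum>i<d. \<Sum>j<d. \<Sum>k<d. \<Sum>r<d. \<Sum>l<d. ?T i j k l r)"
    apply (rule sum.cong[OF refl]) apply (rule sum.cong[OF refl]) apply (rule sum.cong[OF refl]) by (rule sum.swap)
  also have "\<dots> = (\<Sum>i<d. \<Sum>j<d. \<Sum>r<d. \<Sum>k<d. \<Sum>l<d. ?T i j k l r)"
    apply (rule sum.cong[OF refl]) apply (rule sum.cong[OF refl]) by (rule sum.swap)
  also have "\<dots> = (\<Sum>i<d. \<Sum>r<d. \<Sum>j<d. \<Sum>k<d. \<Sum>l<d. ?T i j k l r)"
    apply (rule sum.cong[OF refl]) by (rule sum.swap)
  also have "\<dots> = (\<Sum>r<d. \<Sum>i<d. \<Sum>j<d. \<Sum>k<d. \<Sum>l<d. ?T i j k l r)"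
    by (rule sum.swap)
  also have "\<dots> = (\<Sum>r<d. \<Sum>i<d. \<Sum>k<d. \<Sum>j<d. \<Sum>l<d. ?T i j k l r)"
    apply (rule sum.cong[OF refl]) apply (rule sum.cong[OF refl]) by (rule sum.swap)
  also have "\<dots> = (\<Sum>r<d. qf d A (\<lambda>i. \<Sum>j<d. C r j * psi i j) (\<lambda>i. \<Sum>j<d. C r j * psi i j))"
    unfolding qf_def by (simp add: cnj_sum sum_distrib_left sum_distrib_right algebra_simps)
  finally show ?thesis .
qed

lemma te_nonneg:
  assumes "psd d A" "psd d B"
  shows "tensor_expect d psi A B \<in> \<real> \<and> 0 \<le> Re (tensor_expect d psi A B)"
proof -
  obtain C where C: "\<forall>j<d. \<forall>l<d. B j l = (\<Sum>r<d. cnj (C r j) * C r l)"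
    using cholesky[OF assms(2)] by blast
  show ?thesis unfolding te_as_qf[OF C]
    using psdD[OF assms(1)] by (auto intro!: sum_in_Reals sum_nonneg simp: Re_sum)
qed

lemma qf_chol:
  assumes A: "\<forall>i<d. \<forall>k<d. A i k = (\<Sum>r<d. cnj (C r i) * C r k)"
  shows "qf d A w v = (\<Sum>r<d. cnj (\<Sum>i<d. C r i * w i) * (\<Sum>k<d. C r k * v k))"
proof -
  let ?T = "\<lambda>i k r. cnj (w i) * cnj (C r i) * C r k * v k"
  have "qf d A w v = (\<Sum>i<d. \<Sum>k<d. \<Sum>r<d. ?T i k r)"
    unfolding qf_def using A by (simp add: sum_distrib_left sum_distrib_right algebra_simps)
  also have "\<dots> = (\<Sum>i<d. \<Sum>r<d. \<Sum>k<d. ?T i k r)"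
    apply (rule sum.cong[OF refl]) by (rule sum.swap)
  also have "\<dots> = (\<Sum>r<d. \<Sum>i<d. \<Sum>k<d. ?T i k r)"
    by (rule sum.swap)
  also have "\<dots> = (\<Sum>r<d. cnj (\<Sum>i<d. C r i * w i) * (\<Sum>k<d. C r k * v k))"
    by (simp add: cnj_sum sum_distrib_left sum_distrib_right algebra_simps)
  finally show ?thesis .
qed

lemma complex_cs:
  fixes x y :: "'i \<Rightarrow> complex"
  shows "(cmod (\<Sum>r\<in>R. x r * y r))\<^sup>2 \<le> (\<Sum>r\<in>R. (cmod (x r))\<^sup>2) * (\<Sum>r\<in>R. (cmod (y r))\<^sup>2)"
proof -
  have "cmod (\<Sum>r\<in>R. x r * y r) \<le> (\<Sum>r\<in>R. cmod (x r) * cmod (y r))"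
    by (metis (no_types, lifting) norm_mult norm_sum sum.cong)
  then have "(cmod (\<Sum>r\<in>R. x r * y r))\<^sup>2 \<le> (\<Sum>r\<in>R. cmod (x r) * cmod (y r))\<^sup>2"
    by (simp add: power_mono)
  also have "\<dots> \<le> (\<Sum>r\<in>R. (cmod (x r))\<^sup>2) * (\<Sum>r\<in>R. (cmod (y r))\<^sup>2)"
    by (rule Cauchy_Schwarz_ineq_sum)
  finally show ?thesis .
qed

definition nv :: "nat \<Rightarrow> (nat \<Rightarrow> complex) \<Rightarrow> real" where
  "nv d v = (\<Sum>i<d. (cmod (v i))\<^sup>2)"

definition mv :: "nat \<Rightarrow> (nat \<Rightarrow> nat \<Rightarrow> complex) \<Rightarrow> (nat \<Rightarrow> complex) \<Rightarrow> nat \<Rightarrow> complex" where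
  "mv d A v = (\<lambda>i. \<Sum>k<d. A i k * v k)"

lemma mult_cnj1: "z * cnj z = (complex_of_real (cmod z))\<^sup>2"
  using complex_norm_square[of z, unfolded of_real_power] by (rule sym)
lemma mult_cnj2: "cnj z * z = (complex_of_real (cmod z))\<^sup>2"
  using mult_cnj1[of z] by (simp only: mult.commute)

lemma qf_chol_self:
  assumes A: "\<forall>i<d. \<forall>k<d. A i k = (\<Sum>r<d. cnj (C r i) * C r k)"
  shows "qf d A v v = of_real (\<Sum>r<d. (cmod (\<Sum>k<d. C r k * v k))\<^sup>2)"
  unfolding qf_chol[OF A] by (simp only: mult_cnj2 of_real_sum of_real_power)

lemma qf_cs:
  assumes "psd d A"
  shows "(cmod (qf d A w v))\<^sup>2 \<le> Re (qf d A w w) * Re (qf d A v v)"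
proof -
  obtain C where C: "\<forall>i<d. \<forall>k<d. A i k = (\<Sum>r<d. cnj (C r i) * C r k)"
    using cholesky[OF assms] by blast
  have "(cmod (qf d A w v))\<^sup>2 \<le> (\<Sum>r<d. (cmod (cnj (\<Sum>i<d. C r i * w i)))\<^sup>2) * (\<Sum>r<d. (cmod (\<Sum>k<d. C r k * v k))\<^sup>2)"
    unfolding qf_chol[OF C] by (rule complex_cs)
  then show ?thesis unfolding qf_chol_self[OF C] by (simp only: complex_mod_cnj Re_complex_of_real)
qed

lemma qf_mv: "qf d A w v = (\<Sum>i<d. cnj (w i) * mv d A v i)"
  unfolding qf_def mv_def by (simp add: sum_distrib_left mult.assoc)

lemma qf_id: "qf d (\<lambda>i j. if i = j then 1 else 0) v v = of_real (nv d v)"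
proof -
  have "qf d (\<lambda>i j. if i = j then 1 else 0) v v = (\<Sum>i<d. cnj (v i) * v i)"
    unfolding qf_def by (simp add: if_distrib if_distribR cong: if_cong)
  then show ?thesis unfolding nv_def by (simp add: mult_cnj1 mult_cnj2 mult.commute)
qed

lemma qf_diff: "qf d (\<lambda>i j. M i j - N i j) v w = qf d M v w - qf d N v w"
  unfolding qf_def by (simp add: algebra_simps sum_subtractf)

lemma norm_mv_le:
  assumes "psd d A" "psd d (\<lambda>i j. (if i = j then 1 else 0) - A i j)"
  shows "nv d (mv d A v) \<le> Re (qf d A v v)"
proof -
  define w where "w = mv d A v"
  have 1: "qf d A w v = of_real (nv d w)"
    unfolding qf_mv nv_def w_def by (simp add: mult_cnj1 mult_cnj2 mult.commute)
  have 2: "Re (qf d A w w) \<le> nv d w"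
    using psdD[OF assms(2), of w] unfolding qf_diff qf_id by simp
  have 3: "0 \<le> Re (qf d A v v)" using psdD[OF assms(1)] by simp
  have n0: "0 \<le> nv d w" unfolding nv_def by (simp add: sum_nonneg)
  have "(nv d w)\<^sup>2 \<le> Re (qf d A w w) * Re (qf d A v v)"
    using qf_cs[OF assms(1), of w v] 1 n0 by simp
  also have "\<dots> \<le> nv d w * Re (qf d A v v)"
    using 2 3 by (simp add: mult_right_mono)
  finally have "nv d w * nv d w \<le> nv d w * Re (qf d A v v)" by (simp add: power2_eq_square)
  then show ?thesis unfolding w_def[symmetric]
    using n0 3 by (cases "nv d w = 0") (auto simp: mult_le_cancel_left)
qed

definition sv :: "(nat \<Rightarrow> complex) \<Rightarrow> bool list \<Rightarrow> complex" where
  "sv a xs = (\<Sum>i<length xs. (if xs ! i then a i else - a i))"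

definition Om :: "nat \<Rightarrow> bool list set" where
  "Om d = {xs. length xs = d}"

lemma Om_Suc: "Om (Suc d) = (\<lambda>ys. True # ys) ` Om d \<union> (\<lambda>ys. False # ys) ` Om d"
  unfolding Om_def by (auto simp: length_Suc_conv)

lemma finite_Om: "finite (Om d)"
  using finite_lists_length_eq[of "UNIV :: bool set" d] unfolding Om_def by simp

lemma card_Om: "card (Om d) = 2 ^ d"
  using card_lists_length_eq[of "UNIV :: bool set" d] unfolding Om_def by simp

lemma Om_0: "Om 0 = {[]}" unfolding Om_def by auto

lemma sum_Om_Suc: "(\<Sum>xs\<in>Om (Suc d). f xs) = (\<Sum>ys\<in>Om d. f (True # ys) + f (False # ys))"
proof -
  have "(\<Sum>xs\<in>Om (Suc d). f xs) = (\<Sum>xs\<in>(\<lambda>ys. True # ys) ` Om d. f xs) + (\<Sum>xs\<in>(\<lambda>ys. False # ys) ` Om d. f xs)"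
    unfolding Om_Suc by (rule sum.union_disjoint) (auto simp: finite_Om)
  also have "\<dots> = (\<Sum>ys\<in>Om d. f (True # ys)) + (\<Sum>ys\<in>Om d. f (False # ys))"
    by (subst sum.reindex, simp add: inj_on_def)+ simp
  finally show ?thesis by (simp add: sum.distrib)
qed

lemma sv_Cons_True: "sv a (True # ys) = sv (\<lambda>i. a (Suc i)) ys + a 0"
  unfolding sv_def length_Cons sum.lessThan_Suc_shift by simp

lemma sv_Cons_False: "sv a (False # ys) = sv (\<lambda>i. a (Suc i)) ys - a 0"
  unfolding sv_def length_Cons sum.lessThan_Suc_shift by simp

lemma K1: "(\<Sum>xs\<in>Om d. sv a xs * sv b xs) = 2 ^ d * (\<Sum>i<d. a i * b i)"
proof (induction d arbitrary: a b)
  case 0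
  then show ?case by (simp add: Om_0 sv_def)
next
  case (Suc d)
  have "(\<Sum>xs\<in>Om (Suc d). sv a xs * sv b xs)
     = (\<Sum>ys\<in>Om d. 2 * (sv (\<lambda>i. a (Suc i)) ys * sv (\<lambda>i. b (Suc i)) ys) + 2 * (a 0 * b 0))"
    unfolding sum_Om_Suc sv_Cons_True sv_Cons_False by (intro sum.cong) (auto simp: algebra_simps)
  also have "\<dots> = 2 * (2 ^ d * (\<Sum>i<d. a (Suc i) * b (Suc i))) + 2 * 2 ^ d * (a 0 * b 0)"
    by (simp add: sum.distrib sum_distrib_left[symmetric] Suc.IH card_Om)
  also have "\<dots> = 2 ^ Suc d * (\<Sum>i<Suc d. a i * b i)"
    by (simp add: sum.lessThan_Suc_shift algebra_simps del: sum.lessThan_Suc)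
  finally show ?case .
qed

lemma cmod_pm:
  fixes u v :: complex
  shows "(cmod (u + v))\<^sup>2 + (cmod (u - v))\<^sup>2 = 2 * ((cmod u)\<^sup>2 + (cmod v)\<^sup>2)"
    and "(cmod (u + v))^4 + (cmod (u - v))^4 \<le> 2 * ((cmod u)\<^sup>2 + (cmod v)\<^sup>2)\<^sup>2 + 8 * (cmod u)\<^sup>2 * (cmod v)\<^sup>2"
proof -
  obtain a b where u: "u = Complex a b" by (cases u)
  obtain c e where v: "v = Complex c e" by (cases v)
  show "(cmod (u + v))\<^sup>2 + (cmod (u - v))\<^sup>2 = 2 * ((cmod u)\<^sup>2 + (cmod v)\<^sup>2)"
    unfolding u v cmod_power2 by (simp add: power2_eq_square algebra_simps)
  have cs: "(a * c + b * e)\<^sup>2 \<le> (a\<^sup>2 + b\<^sup>2) * (c\<^sup>2 + e\<^sup>2)"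
  proof -
    have "0 \<le> (a * e - b * c)\<^sup>2" by simp
    then show ?thesis by (simp add: power2_eq_square algebra_simps)
  qed
  have p4: "\<And>z. (cmod z)^4 = ((cmod z)\<^sup>2)\<^sup>2" by simp
  have "(cmod (u + v))^4 + (cmod (u - v))^4 = 2 * ((a\<^sup>2 + b\<^sup>2) + (c\<^sup>2 + e\<^sup>2))\<^sup>2 + 8 * (a * c + b * e)\<^sup>2"
    unfolding p4 u v cmod_power2 by (simp add: power2_eq_square algebra_simps)
  also have "\<dots> \<le> 2 * ((a\<^sup>2 + b\<^sup>2) + (c\<^sup>2 + e\<^sup>2))\<^sup>2 + 8 * ((a\<^sup>2 + b\<^sup>2) * (c\<^sup>2 + e\<^sup>2))"
    using cs by simp
  finally show "(cmod (u + v))^4 + (cmod (u - v))^4 \<le> 2 * ((cmod u)\<^sup>2 + (cmod v)\<^sup>2)\<^sup>2 + 8 * (cmod u)\<^sup>2 * (cmod v)\<^sup>2"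
    unfolding u v cmod_power2 by (simp add: algebra_simps)
qed

lemma K2: "(\<Sum>xs\<in>Om d. (cmod (sv a xs))\<^sup>2) = 2 ^ d * nv d a"
proof (induction d arbitrary: a)
  case 0
  then show ?case by (simp add: Om_0 sv_def nv_def)
next
  case (Suc d)
  have "(\<Sum>xs\<in>Om (Suc d). (cmod (sv a xs))\<^sup>2)
     = (\<Sum>ys\<in>Om d. 2 * (cmod (sv (\<lambda>i. a (Suc i)) ys))\<^sup>2 + 2 * (cmod (a 0))\<^sup>2)"
    unfolding sum_Om_Suc sv_Cons_True sv_Cons_False cmod_pm(1) by (simp add: algebra_simps)
  also have "\<dots> = 2 * (2 ^ d * nv d (\<lambda>i. a (Suc i))) + 2 * 2 ^ d * (cmod (a 0))\<^sup>2"
    by (simp add: sum.distrib sum_distrib_left[symmetric] Suc.IH card_Om)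
  also have "\<dots> = 2 ^ Suc d * nv (Suc d) a"
    by (simp add: nv_def sum.lessThan_Suc_shift algebra_simps del: sum.lessThan_Suc)
  finally show ?case .
qed

lemma K4: "(\<Sum>xs\<in>Om d. (cmod (sv a xs))^4) \<le> 3 * 2 ^ d * (nv d a)\<^sup>2"
proof (induction d arbitrary: a)
  case 0
  then show ?case by (simp add: Om_0 sv_def nv_def)
next
  case (Suc d)
  let ?a = "\<lambda>i. a (Suc i)"
  let ?q = "(cmod (a 0))\<^sup>2"
  let ?s = "nv d ?a"
  have "(\<Sum>xs\<in>Om (Suc d). (cmod (sv a xs))^4)
     \<le> (\<Sum>ys\<in>Om d. 2 * ((cmod (sv ?a ys))\<^sup>2 + ?q)\<^sup>2 + 8 * (cmod (sv ?a ys))\<^sup>2 * ?q)"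
    unfolding sum_Om_Suc sv_Cons_True sv_Cons_False by (intro sum_mono cmod_pm(2))
  also have "\<dots> = 2 * (\<Sum>ys\<in>Om d. (cmod (sv ?a ys))^4) + 12 * ?q * (\<Sum>ys\<in>Om d. (cmod (sv ?a ys))\<^sup>2) + 2 * 2 ^ d * ?q\<^sup>2"
    by (simp add: power2_eq_square power4_eq_xxxx sum.distrib sum_distrib_left card_Om algebra_simps)
  also have "\<dots> \<le> 2 * (3 * 2 ^ d * ?s\<^sup>2) + 12 * ?q * (2 ^ d * ?s) + 2 * 2 ^ d * ?q\<^sup>2"
    using Suc.IH[of ?a] K2[of ?a d] by simp
  also have "\<dots> \<le> 3 * 2 ^ Suc d * (nv (Suc d) a)\<^sup>2"
  proof -
    have "nv (Suc d) a = ?q + ?s" by (simp add: nv_def sum.lessThan_Suc_shift del: sum.lessThan_Suc)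
    moreover have "0 \<le> ?q" "0 \<le> ?s" by (auto simp: nv_def sum_nonneg)
    ultimately show ?thesis by (simp add: power2_eq_square algebra_simps)
  qed
  finally show ?case .
qed

definition LHS :: "nat \<Rightarrow> nat \<Rightarrow> (nat \<Rightarrow> nat \<Rightarrow> complex) \<Rightarrow> nat \<Rightarrow> (nat \<Rightarrow> nat \<Rightarrow> complex) \<Rightarrow> (nat \<Rightarrow> nat \<Rightarrow> complex) \<Rightarrow> real" where
  "LHS n m c d a b = cmod (\<Sum>x<n. \<Sum>y<m. c x y * (\<Sum>i<d. a x i * b y i))"

definition Tset :: "nat \<Rightarrow> nat \<Rightarrow> (nat \<Rightarrow> nat \<Rightarrow> complex) \<Rightarrow> real set" where
  "Tset n m c = {LHS n m c d a b | d a b. (\<forall>x<n. nv d (a x) \<le> 1) \<and> (\<forall>y<m. nv d (b y) \<le> 1)}"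

definition Cs :: "nat \<Rightarrow> nat \<Rightarrow> (nat \<Rightarrow> nat \<Rightarrow> complex) \<Rightarrow> real" where
  "Cs n m c = (\<Sum>x<n. \<Sum>y<m. cmod (c x y))"

definition Bset :: "nat \<Rightarrow> nat \<Rightarrow> (nat \<Rightarrow> nat \<Rightarrow> complex) \<Rightarrow> real set" where
  "Bset n m c = {cmod (\<Sum>x<n. \<Sum>y<m. c x y * s x * t y) | s t.
                   (\<forall>x<n. cmod (s x) \<le> 1) \<and> (\<forall>y<m. cmod (t y) \<le> 1)}"

lemma nv_nonneg: "0 \<le> nv d a" unfolding nv_def by (simp add: sum_nonneg)

lemma inner_bound: "cmod (\<Sum>i<d. a i * b i) \<le> sqrt (nv d a) * sqrt (nv d b)"
proof -
  have "(cmod (\<Sum>i<d. a i * b i))\<^sup>2 \<le> nv d a * nv d b"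
    unfolding nv_def by (rule complex_cs)
  then show ?thesis
    by (metis nv_nonneg real_le_rsqrt real_sqrt_mult zero_le_mult_iff)
qed

lemma LHS_le_Cs:
  assumes "\<forall>x<n. nv d (a x) \<le> 1" "\<forall>y<m. nv d (b y) \<le> 1"
  shows "LHS n m c d a b \<le> Cs n m c"
proof -
  have "LHS n m c d a b \<le> (\<Sum>x<n. \<Sum>y<m. cmod (c x y * (\<Sum>i<d. a x i * b y i)))"
    unfolding LHS_def by (rule order_trans[OF norm_sum sum_mono]) (rule norm_sum)
  also have "\<dots> \<le> (\<Sum>x<n. \<Sum>y<m. cmod (c x y))"
  proof (intro sum_mono)
    fix x y assume "x \<in> {..<n}" "y \<in> {..<m}"
    then have "sqrt (nv d (a x)) \<le> 1" "sqrt (nv d (b y)) \<le> 1" using assms by auto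
    then have "cmod (\<Sum>i<d. a x i * b y i) \<le> 1"
    proof -
      have "sqrt (nv d (a x)) * sqrt (nv d (b y)) \<le> 1"
        by (rule mult_le_one) (use \<open>sqrt (nv d (a x)) \<le> 1\<close> \<open>sqrt (nv d (b y)) \<le> 1\<close> nv_nonneg in auto)
      then show ?thesis using inner_bound[of "a x" "b y" d] by linarith
    qed
    then show "cmod (c x y * (\<Sum>i<d. a x i * b y i)) \<le> cmod (c x y)"
      by (simp add: norm_mult mult_left_le)
  qed
  finally show ?thesis unfolding Cs_def .
qed

lemma Tset_ne: "Tset n m c \<noteq> {}"
proof -
  have "LHS n m c 0 (\<lambda>x i. 0) (\<lambda>x i. 0) \<in> Tset n m c" unfolding Tset_def by (force simp: nv_def)
  then show ?thesis by blast
qed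

lemma Tset_bdd: "bdd_above (Tset n m c)"
  unfolding Tset_def bdd_above_def using LHS_le_Cs by blast

lemma LHS_le_SS:
  assumes "\<forall>x<n. nv d (a x) \<le> 1" "\<forall>y<m. nv d (b y) \<le> 1"
  shows "LHS n m c d a b \<le> Sup (Tset n m c)"
  by (rule cSup_upper[OF _ Tset_bdd]) (use assms in \<open>auto simp: Tset_def\<close>)

lemma nv_scale: "nv d (\<lambda>i. a i / of_real k) = nv d a / k\<^sup>2"
  unfolding nv_def by (simp add: norm_divide power_divide sum_divide_distrib)

lemma LHS_scale:
  assumes "R1 > 0" "R2 > 0" "\<forall>x<n. nv d (a x) \<le> R1" "\<forall>y<m. nv d (b y) \<le> R2"
  shows "LHS n m c d a b \<le> sqrt R1 * sqrt R2 * Sup (Tset n m c)"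
proof -
  define a' where "a' = (\<lambda>x i. a x i / of_real (sqrt R1))"
  define b' where "b' = (\<lambda>y i. b y i / of_real (sqrt R2))"
  have "\<forall>x<n. nv d (a' x) \<le> 1" unfolding a'_def nv_scale using assms by simp
  moreover have "\<forall>y<m. nv d (b' y) \<le> 1" unfolding b'_def nv_scale using assms by simp
  ultimately have le: "LHS n m c d a' b' \<le> Sup (Tset n m c)" by (rule LHS_le_SS)
  have "LHS n m c d a' b' = LHS n m c d a b / (sqrt R1 * sqrt R2)"
  proof -
    have "(\<Sum>x<n. \<Sum>y<m. c x y * (\<Sum>i<d. a' x i * b' y i))
        = (\<Sum>x<n. \<Sum>y<m. c x y * (\<Sum>i<d. a x i * b y i)) / of_real (sqrt R1 * sqrt R2)"
      unfolding a'_def b'_def by (simp add: sum_divide_distrib sum_distrib_left)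
    then show ?thesis unfolding LHS_def using assms by (simp add: norm_divide norm_mult)
  qed
  with le have "LHS n m c d a b / (sqrt R1 * sqrt R2) \<le> Sup (Tset n m c)" by simp
  then show ?thesis using assms by (simp add: divide_le_eq mult.commute)
qed

lemma Bset_ne: "Bset n m c \<noteq> {}"
proof -
  have "cmod (\<Sum>x<n. \<Sum>y<m. c x y * 0 * 0) \<in> Bset n m c" unfolding Bset_def
    by (rule CollectI, rule exI[where x="\<lambda>x. 0"], rule exI[where x="\<lambda>y. 0"]) simp
  then show ?thesis by blast
qed

lemma Bset_bdd: "bdd_above (Bset n m c)"
proof -
  have "\<forall>z\<in>Bset n m c. z \<le> Cs n m c"
  proof
    fix z assume "z \<in> Bset n m c"
    then obtain s t where z: "z = cmod (\<Sum>x<n. \<Sum>y<m. c x y * s x * t y)"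
      and st: "\<forall>x<n. cmod (s x) \<le> 1" "\<forall>y<m. cmod (t y) \<le> 1" unfolding Bset_def by blast
    have "z \<le> (\<Sum>x<n. \<Sum>y<m. cmod (c x y * s x * t y))"
      unfolding z by (rule order_trans[OF norm_sum sum_mono]) (rule norm_sum)
    also have "\<dots> \<le> Cs n m c" unfolding Cs_def
    proof (intro sum_mono)
      fix x y assume "x \<in> {..<n}" "y \<in> {..<m}"
      then have "cmod (s x) \<le> 1" "cmod (t y) \<le> 1" using st by auto
      then have "cmod (s x) * cmod (t y) \<le> 1" by (intro mult_le_one) auto
      then show "cmod (c x y * s x * t y) \<le> cmod (c x y)"
        by (simp add: norm_mult mult.assoc mult_left_le)
    qed
    finally show "z \<le> Cs n m c" .
  qed
  then show ?thesis unfolding bdd_above_def by blast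
qed

lemma in_Bset_le:
  assumes "\<forall>x<n. cmod (s x) \<le> 1" "\<forall>y<m. cmod (t y) \<le> 1"
  shows "cmod (\<Sum>x<n. \<Sum>y<m. c x y * s x * t y) \<le> Sup (Bset n m c)"
  by (rule cSup_upper[OF _ Bset_bdd]) (use assms in \<open>auto simp: Bset_def\<close>)

definition trunc :: "real \<Rightarrow> complex \<Rightarrow> complex" where
  "trunc M z = (if cmod z \<le> M then z else of_real (M / cmod z) * z)"

lemma trunc_big: "M < cmod z \<Longrightarrow> 0 < M \<Longrightarrow> cmod (of_real (M / cmod z) * z) = M"
proof -
  assume a: "M < cmod z" "0 < M"
  then have "z \<noteq> 0" by auto
  then show ?thesis using a by (simp only: norm_mult norm_of_real) simp
qed

lemma trunc_le_M: "0 < M \<Longrightarrow> cmod (trunc M z) \<le> M"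
  unfolding trunc_def using trunc_big[of M z] by auto

lemma trunc_le: "0 < M \<Longrightarrow> cmod (trunc M z) \<le> cmod z"
  unfolding trunc_def using trunc_big[of M z] by auto

lemma trunc_res: assumes "0 < M" shows "(cmod (z - trunc M z))\<^sup>2 \<le> (cmod z)^4 / M\<^sup>2"
proof (cases "cmod z \<le> M")
  case True then show ?thesis unfolding trunc_def by simp
next
  case False
  then have zM: "M < cmod z" by simp
  have "z - trunc M z = of_real (1 - M / cmod z) * z" unfolding trunc_def using False
    by (simp only: if_False of_real_diff of_real_1 left_diff_distrib mult_1)
  then have "cmod (z - trunc M z) = \<bar>1 - M / cmod z\<bar> * cmod z"
    by (simp only: norm_mult norm_of_real)
  also have "\<dots> = cmod z - M"
  proof -
    have zp: "cmod z > 0" "z \<noteq> 0" using zM assms by auto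
    have "M / cmod z \<le> 1" using zM zp by (simp add: divide_le_eq_1)
    then have "0 \<le> 1 - M / cmod z" by simp
    then show ?thesis using zp by (simp add: field_simps)
  qed
  also have "\<dots> \<le> (cmod z)\<^sup>2 / M"
  proof -
    have "M * cmod z \<le> cmod z * cmod z" using zM by (intro mult_right_mono) auto
    then have "M * (cmod z - M) \<le> (cmod z)\<^sup>2" using assms
      by (simp add: power2_eq_square algebra_simps) (smt (verit) zero_less_mult_iff)
    then show ?thesis using assms by (simp add: field_simps)
  qed
  finally have h: "cmod (z - trunc M z) \<le> (cmod z)\<^sup>2 / M" .
  have "(cmod (z - trunc M z))\<^sup>2 \<le> ((cmod z)\<^sup>2 / M)\<^sup>2"
    by (rule power_mono[OF h]) simp
  then show ?thesis by (simp add: power_divide power2_eq_square power4_eq_xxxx)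
qed

lemma sqrt316: "sqrt (3/16) \<le> 7/16"
proof -
  have "sqrt (3/16) \<le> sqrt ((7/16)\<^sup>2)" by (rule real_sqrt_le_mono) (simp add: power2_eq_square)
  then show ?thesis by simp
qed

lemma SS_nonneg: "0 \<le> Sup (Tset n m c)"
proof -
  have "LHS n m c 0 (\<lambda>x i. 0) (\<lambda>x i. 0) \<le> Sup (Tset n m c)" by (rule LHS_le_SS) (auto simp: nv_def)
  moreover have "0 \<le> LHS n m c 0 (\<lambda>x i. 0) (\<lambda>x i. 0)" unfolding LHS_def by simp
  ultimately show ?thesis by linarith
qed

lemma groth_main:
  assumes va: "\<forall>x<n. nv d (a x) \<le> 1" and vb: "\<forall>y<m. nv d (b y) \<le> 1"
  shows "LHS n m c d a b \<le> 16 * Sup (Bset n m c) + 7/8 * Sup (Tset n m c)"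
proof -
  define N where "N = card (Om d)"
  have N: "N = 2 ^ d" unfolding N_def card_Om ..
  have Npos: "real N > 0" unfolding N by simp
  obtain e where e: "bij_betw e {..<N} (Om d)"
    using ex_bij_betw_nat_finite[OF finite_Om, of d] unfolding N_def atLeast0LessThan by blast
  have reidx: "\<And>f. (\<Sum>k<N. f (e k)) = (\<Sum>w\<in>Om d. f w)"
    by (rule sum.reindex_bij_betw[OF e])
  define F where "F = (\<lambda>x w. sv (a x) w)"
  define G where "G = (\<lambda>y w. sv (b y) w)"
  define TF where "TF = (\<lambda>x w. trunc 4 (F x w))"
  define TG where "TG = (\<lambda>y w. trunc 4 (G y w))"
  define u2 where "u2 = (\<lambda>x k. (F x (e k) - TF x (e k)) / of_nat N)"
  define w2 where "w2 = (\<lambda>y k. G y (e k))"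
  define u3 where "u3 = (\<lambda>x k. TF x (e k) / of_nat N)"
  define w3 where "w3 = (\<lambda>y k. G y (e k) - TG y (e k))"
  define Q1 where "Q1 = (\<Sum>x<n. \<Sum>y<m. c x y * ((\<Sum>w\<in>Om d. TF x w * TG y w) / of_nat N))"
  define Q2 where "Q2 = (\<Sum>x<n. \<Sum>y<m. c x y * (\<Sum>k<N. u2 x k * w2 y k))"
  define Q3 where "Q3 = (\<Sum>x<n. \<Sum>y<m. c x y * (\<Sum>k<N. u3 x k * w3 y k))"
  have inner: "\<And>x y. (\<Sum>i<d. a x i * b y i) = (\<Sum>w\<in>Om d. TF x w * TG y w) / of_nat N
        + (\<Sum>k<N. u2 x k * w2 y k) + (\<Sum>k<N. u3 x k * w3 y k)"
  proof -
    fix x y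
    have "(\<Sum>i<d. a x i * b y i) = (\<Sum>w\<in>Om d. F x w * G y w) / of_nat N"
      unfolding F_def G_def K1 N using Npos by (simp add: N)
    also have "\<dots> = (\<Sum>w\<in>Om d. TF x w * TG y w + (F x w - TF x w) * G y w + TF x w * (G y w - TG y w)) / of_nat N"
      by (intro arg_cong[where f="\<lambda>z. z / of_nat N"] sum.cong) (auto simp: algebra_simps)
    also have "\<dots> = (\<Sum>w\<in>Om d. TF x w * TG y w) / of_nat N
        + (\<Sum>w\<in>Om d. (F x w - TF x w) * G y w) / of_nat N + (\<Sum>w\<in>Om d. TF x w * (G y w - TG y w)) / of_nat N"
      by (simp add: sum.distrib add_divide_distrib)
    also have "(\<Sum>w\<in>Om d. (F x w - TF x w) * G y w) / of_nat N = (\<Sum>k<N. u2 x k * w2 y k)"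
      unfolding u2_def w2_def reidx[where f="\<lambda>w. (F x w - TF x w) / of_nat N * G y w"]
      by (simp add: sum_divide_distrib)
    also have "(\<Sum>w\<in>Om d. TF x w * (G y w - TG y w)) / of_nat N = (\<Sum>k<N. u3 x k * w3 y k)"
      unfolding u3_def w3_def reidx[where f="\<lambda>w. TF x w / of_nat N * (G y w - TG y w)"]
      by (simp add: sum_divide_distrib)
    finally show "(\<Sum>i<d. a x i * b y i) = (\<Sum>w\<in>Om d. TF x w * TG y w) / of_nat N
        + (\<Sum>k<N. u2 x k * w2 y k) + (\<Sum>k<N. u3 x k * w3 y k)" .
  qed
  have "LHS n m c d a b = cmod (Q1 + Q2 + Q3)"
    unfolding LHS_def Q1_def Q2_def Q3_def inner by (simp add: distrib_left sum.distrib)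
  also have "\<dots> \<le> cmod Q1 + cmod Q2 + cmod Q3" by (meson norm_triangle_le order_refl add_mono)
  finally have main: "LHS n m c d a b \<le> cmod Q1 + cmod Q2 + cmod Q3" .
  have Q1': "Q1 = (\<Sum>w\<in>Om d. \<Sum>x<n. \<Sum>y<m. c x y * TF x w * TG y w) / of_nat N"
  proof -
    have "Q1 = (\<Sum>x<n. \<Sum>y<m. \<Sum>w\<in>Om d. c x y * TF x w * TG y w / of_nat N)"
      unfolding Q1_def by (simp add: sum_distrib_left sum_divide_distrib mult.assoc)
    also have "\<dots> = (\<Sum>x<n. \<Sum>w\<in>Om d. \<Sum>y<m. c x y * TF x w * TG y w / of_nat N)"
      by (rule sum.cong[OF refl]) (rule sum.swap)
    also have "\<dots> = (\<Sum>w\<in>Om d. \<Sum>x<n. \<Sum>y<m. c x y * TF x w * TG y w / of_nat N)"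
      by (rule sum.swap)
    finally show ?thesis by (simp add: sum_divide_distrib)
  qed
  have each: "\<And>w. cmod (\<Sum>x<n. \<Sum>y<m. c x y * TF x w * TG y w) \<le> 16 * Sup (Bset n m c)"
  proof -
    fix w
    have "(\<Sum>x<n. \<Sum>y<m. c x y * TF x w * TG y w) = 16 * (\<Sum>x<n. \<Sum>y<m. c x y * (TF x w / 4) * (TG y w / 4))"
      by (simp add: sum_distrib_left algebra_simps)
    moreover have "cmod (\<Sum>x<n. \<Sum>y<m. c x y * (TF x w / 4) * (TG y w / 4)) \<le> Sup (Bset n m c)"
      by (rule in_Bset_le) (auto simp: TF_def TG_def norm_divide trunc_le_M)
    ultimately show "cmod (\<Sum>x<n. \<Sum>y<m. c x y * TF x w * TG y w) \<le> 16 * Sup (Bset n m c)"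
      by (simp add: norm_mult)
  qed
  have cQ1: "cmod Q1 \<le> 16 * Sup (Bset n m c)"
  proof -
    have "cmod Q1 \<le> (\<Sum>w\<in>Om d. cmod (\<Sum>x<n. \<Sum>y<m. c x y * TF x w * TG y w)) / real N"
      unfolding Q1' by (simp add: norm_divide norm_sum divide_right_mono)
    also have "\<dots> \<le> (\<Sum>w\<in>Om d. 16 * Sup (Bset n m c)) / real N"
      by (intro divide_right_mono sum_mono each) simp
    also have "\<dots> = 16 * Sup (Bset n m c)" using Npos by (simp add: N_def)
    finally show ?thesis .
  qed
  have nvre: "\<And>f. nv N (\<lambda>k. f (e k)) = (\<Sum>w\<in>Om d. (cmod (f w))\<^sup>2)"
    unfolding nv_def by (rule reidx)
  have F2: "\<And>x. x < n \<Longrightarrow> (\<Sum>w\<in>Om d. (cmod (F x w))\<^sup>2) \<le> real N"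
    using va unfolding F_def K2 N by simp
  have G2: "\<And>y. y < m \<Longrightarrow> (\<Sum>w\<in>Om d. (cmod (G y w))\<^sup>2) \<le> real N"
    using vb unfolding G_def K2 N by simp
  have F4: "\<And>x. x < n \<Longrightarrow> (\<Sum>w\<in>Om d. (cmod (F x w - TF x w))\<^sup>2) \<le> 3 * real N / 16"
  proof -
    fix x assume x: "x < n"
    have "(\<Sum>w\<in>Om d. (cmod (F x w - TF x w))\<^sup>2) \<le> (\<Sum>w\<in>Om d. (cmod (F x w))^4 / 16)"
      unfolding TF_def by (intro sum_mono) (use trunc_res[of 4] in simp)
    also have "\<dots> \<le> 3 * 2 ^ d * (nv d (a x))\<^sup>2 / 16"
      unfolding F_def sum_divide_distrib[symmetric] using K4[of "a x" d] by simp
    also have "\<dots> \<le> 3 * real N / 16"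
      using va x nv_nonneg[of d "a x"] by (simp add: N power_le_one)
    finally show "(\<Sum>w\<in>Om d. (cmod (F x w - TF x w))\<^sup>2) \<le> 3 * real N / 16" .
  qed
  have G4: "\<And>y. y < m \<Longrightarrow> (\<Sum>w\<in>Om d. (cmod (G y w - TG y w))\<^sup>2) \<le> 3 * real N / 16"
  proof -
    fix y assume y: "y < m"
    have "(\<Sum>w\<in>Om d. (cmod (G y w - TG y w))\<^sup>2) \<le> (\<Sum>w\<in>Om d. (cmod (G y w))^4 / 16)"
      unfolding TG_def by (intro sum_mono) (use trunc_res[of 4] in simp)
    also have "\<dots> \<le> 3 * 2 ^ d * (nv d (b y))\<^sup>2 / 16"
      unfolding G_def sum_divide_distrib[symmetric] using K4[of "b y" d] by simp
    also have "\<dots> \<le> 3 * real N / 16"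
      using vb y nv_nonneg[of d "b y"] by (simp add: N power_le_one)
    finally show "(\<Sum>w\<in>Om d. (cmod (G y w - TG y w))\<^sup>2) \<le> 3 * real N / 16" .
  qed
  have TF2: "\<And>x. x < n \<Longrightarrow> (\<Sum>w\<in>Om d. (cmod (TF x w))\<^sup>2) \<le> real N"
  proof -
    fix x assume "x < n"
    have "(\<Sum>w\<in>Om d. (cmod (TF x w))\<^sup>2) \<le> (\<Sum>w\<in>Om d. (cmod (F x w))\<^sup>2)"
      unfolding TF_def by (intro sum_mono power_mono trunc_le) auto
    then show "(\<Sum>w\<in>Om d. (cmod (TF x w))\<^sup>2) \<le> real N" using F2[OF \<open>x < n\<close>] by simp
  qed
  have cQ2: "cmod Q2 \<le> 7/16 * Sup (Tset n m c)"
  proof -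
    have "cmod Q2 = LHS n m c N u2 w2" unfolding Q2_def LHS_def ..
    also have "\<dots> \<le> sqrt (3 / (16 * real N)) * sqrt (real N) * Sup (Tset n m c)"
    proof (rule LHS_scale)
      show "0 < 3 / (16 * real N)" "0 < real N" using Npos by auto
      show "\<forall>x<n. nv N (u2 x) \<le> 3 / (16 * real N)"
      proof (intro allI impI)
        fix x assume x: "x < n"
        have "nv N (u2 x) = (\<Sum>w\<in>Om d. (cmod (F x w - TF x w))\<^sup>2) / (real N)\<^sup>2"
        proof -
          have "nv N (u2 x) = nv N (\<lambda>k. F x (e k) - TF x (e k)) / (real N)\<^sup>2"
            unfolding u2_def using nv_scale[where k="real N" and d=N and a="\<lambda>k. F x (e k) - TF x (e k)"] by simp
          then show ?thesis using nvre[of "\<lambda>w. F x w - TF x w"] by simp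
        qed
        also have "\<dots> \<le> (3 * real N / 16) / (real N)\<^sup>2"
          by (rule divide_right_mono[OF F4[OF x]]) simp
        also have "\<dots> = 3 / (16 * real N)" using Npos by (simp add: power2_eq_square)
        finally show "nv N (u2 x) \<le> 3 / (16 * real N)" .
      qed
      show "\<forall>y<m. nv N (w2 y) \<le> real N"
        unfolding w2_def nvre using G2 by simp
    qed
    also have "sqrt (3 / (16 * real N)) * sqrt (real N) = sqrt (3/16)"
      using Npos by (simp add: real_sqrt_mult[symmetric])
    finally show ?thesis
      using sqrt316 SS_nonneg by (meson dual_order.trans mult_right_mono)
  qed
  have cQ3: "cmod Q3 \<le> 7/16 * Sup (Tset n m c)"
  proof -
    have "cmod Q3 = LHS n m c N u3 w3" unfolding Q3_def LHS_def ..
    also have "\<dots> \<le> sqrt (1 / real N) * sqrt (3 * real N / 16) * Sup (Tset n m c)"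
    proof (rule LHS_scale)
      show "0 < 1 / real N" "0 < 3 * real N / 16" using Npos by auto
      show "\<forall>x<n. nv N (u3 x) \<le> 1 / real N"
      proof (intro allI impI)
        fix x assume x: "x < n"
        have "nv N (u3 x) = (\<Sum>w\<in>Om d. (cmod (TF x w))\<^sup>2) / (real N)\<^sup>2"
        proof -
          have "nv N (u3 x) = nv N (\<lambda>k. TF x (e k)) / (real N)\<^sup>2"
            unfolding u3_def using nv_scale[where k="real N" and d=N and a="\<lambda>k. TF x (e k)"] by simp
          then show ?thesis using nvre[of "\<lambda>w. TF x w"] by simp
        qed
        also have "\<dots> \<le> real N / (real N)\<^sup>2"
          by (rule divide_right_mono[OF TF2[OF x]]) simp
        also have "\<dots> = 1 / real N" using Npos by (simp add: power2_eq_square)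
        finally show "nv N (u3 x) \<le> 1 / real N" .
      qed
      show "\<forall>y<m. nv N (w3 y) \<le> 3 * real N / 16"
      proof (intro allI impI)
        fix y assume y: "y < m"
        have "nv N (w3 y) = (\<Sum>w\<in>Om d. (cmod (G y w - TG y w))\<^sup>2)"
          unfolding w3_def using nvre[of "\<lambda>w. G y w - TG y w"] by simp
        then show "nv N (w3 y) \<le> 3 * real N / 16" using G4[OF y] by simp
      qed
    qed
    also have "sqrt (1 / real N) * sqrt (3 * real N / 16) = sqrt (3/16)"
      using Npos by (simp add: real_sqrt_mult[symmetric])
    finally show ?thesis
      using sqrt316 SS_nonneg by (meson dual_order.trans mult_right_mono)
  qed
  show ?thesis using main cQ1 cQ2 cQ3 by linarith
qed

lemma groth_exists: "groth_ineq_C 128"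
  unfolding groth_ineq_C_def
proof (intro allI impI)
  fix n m :: nat and c :: "nat \<Rightarrow> nat \<Rightarrow> complex" and d :: nat and a b :: "nat \<Rightarrow> nat \<Rightarrow> complex"
  assume va: "\<forall>x<n. (\<Sum>i<d. (cmod (a x i))\<^sup>2) \<le> 1" and vb: "\<forall>y<m. (\<Sum>i<d. (cmod (b y i))\<^sup>2) \<le> 1"
  have SSle: "Sup (Tset n m c) \<le> 128 * Sup (Bset n m c)"
  proof -
    have "Sup (Tset n m c) \<le> 16 * Sup (Bset n m c) + 7/8 * Sup (Tset n m c)"
    proof (rule cSup_least[OF Tset_ne])
      fix z assume "z \<in> Tset n m c"
      then obtain d' a' b' where "z = LHS n m c d' a' b'" "\<forall>x<n. nv d' (a' x) \<le> 1" "\<forall>y<m. nv d' (b' y) \<le> 1"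
        unfolding Tset_def by blast
      then show "z \<le> 16 * Sup (Bset n m c) + 7/8 * Sup (Tset n m c)" using groth_main by blast
    qed
    then show ?thesis by linarith
  qed
  have "LHS n m c d a b \<le> Sup (Tset n m c)"
    by (rule LHS_le_SS) (use va vb in \<open>auto simp: nv_def\<close>)
  with SSle show "cmod (\<Sum>x<n. \<Sum>y<m. c x y * (\<Sum>i<d. a x i * b y i))
       \<le> 128 * Sup {cmod (\<Sum>x<n. \<Sum>y<m. c x y * s x * t y) | s t.
                   (\<forall>x<n. cmod (s x) \<le> 1) \<and> (\<forall>y<m. cmod (t y) \<le> 1)}"
    unfolding LHS_def Bset_def by linarith
qed

lemma mix_corr:
  fixes lam :: "'i::finite \<Rightarrow> real" and Q1 :: "'i \<Rightarrow> 'x \<Rightarrow> 'a::finite \<Rightarrow> real"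
    and Q2 :: "'i \<Rightarrow> 'y \<Rightarrow> 'b::finite \<Rightarrow> real"
  assumes "\<forall>i. 0 \<le> lam i" "(\<Sum>i\<in>UNIV. lam i) = 1" "\<forall>i. cond_dist (Q1 i)" "\<forall>i. cond_dist (Q2 i)"
  shows "(\<lambda>x y a b. \<Sum>i\<in>UNIV. lam i * Q1 i x a * Q2 i y b) \<in> classical_corr"
proof -
  obtain e where e: "bij_betw e {..<CARD('i)} (UNIV :: 'i set)"
    using ex_bij_betw_nat_finite[of "UNIV :: 'i set"] unfolding atLeast0LessThan by auto
  have r: "\<And>f :: 'i \<Rightarrow> real. (\<Sum>j<CARD('i). f (e j)) = (\<Sum>i\<in>UNIV. f i)"
    by (rule sum.reindex_bij_betw[OF e])
  show ?thesis unfolding classical_corr_def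
  proof (intro CollectI exI conjI)
    show "\<forall>j<CARD('i). 0 \<le> lam (e j)" using assms by simp
    show "(\<Sum>j<CARD('i). lam (e j)) = 1" using r[of lam] assms by simp
    show "\<forall>j<CARD('i). cond_dist (Q1 (e j)) \<and> cond_dist (Q2 (e j))" using assms by simp
    show "(\<lambda>x y a b. \<Sum>i\<in>UNIV. lam i * Q1 i x a * Q2 i y b) = (\<lambda>x y a b. \<Sum>j<CARD('i). lam (e j) * Q1 (e j) x a * Q2 (e j) y b)"
      by (intro ext) (rule r[symmetric])
  qed
qed

lemma cond_dist_le1: "cond_dist P \<Longrightarrow> P x a \<le> 1"
proof -
  assume c: "cond_dist P"
  have "P x a \<le> (\<Sum>a\<in>UNIV. P x a)"
    by (rule member_le_sum) (use c in \<open>auto simp: cond_dist_def\<close>)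
  then show ?thesis using c by (simp add: cond_dist_def)
qed

lemma corr_bounds:
  fixes P :: "'x \<Rightarrow> 'y \<Rightarrow> 'a::finite \<Rightarrow> 'b::finite \<Rightarrow> real"
  assumes "P \<in> classical_corr"
  shows "0 \<le> P x y a b \<and> P x y a b \<le> 1"
proof -
  obtain k :: nat and lam :: "nat \<Rightarrow> real" and P1 :: "nat \<Rightarrow> 'x \<Rightarrow> 'a \<Rightarrow> real" and P2 :: "nat \<Rightarrow> 'y \<Rightarrow> 'b \<Rightarrow> real" where h: "\<forall>i<k. 0 \<le> lam i" "(\<Sum>i<k. lam i) = 1"
    "\<forall>i<k. cond_dist (P1 i) \<and> cond_dist (P2 i)"
    "P = (\<lambda>x y a b. \<Sum>i<k. lam i * P1 i x a * P2 i y b)"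
    using assms unfolding classical_corr_def mem_Collect_eq by blast
  have nn: "\<And>i. i < k \<Longrightarrow> 0 \<le> P1 i x a \<and> P1 i x a \<le> 1 \<and> 0 \<le> P2 i y b \<and> P2 i y b \<le> 1"
  proof -
    fix i assume "i < k"
    then have c1: "cond_dist (P1 i)" and c2: "cond_dist (P2 i)" using h(3) by auto
    have "P1 i x a \<le> 1" "P2 i y b \<le> 1" using cond_dist_le1[OF c1] cond_dist_le1[OF c2] by auto
    moreover have "0 \<le> P1 i x a" "0 \<le> P2 i y b" using c1 c2 unfolding cond_dist_def by auto
    ultimately show "0 \<le> P1 i x a \<and> P1 i x a \<le> 1 \<and> 0 \<le> P2 i y b \<and> P2 i y b \<le> 1" by simp
  qed
  have "0 \<le> P x y a b" unfolding h(4) using h(1) nn by (auto intro!: sum_nonneg)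
  moreover have "P x y a b \<le> (\<Sum>i<k. lam i)" unfolding h(4)
  proof (rule sum_mono)
    fix i assume "i \<in> {..<k}"
    then have "P1 i x a * P2 i y b \<le> 1" using nn by (auto intro: mult_le_one)
    then show "lam i * P1 i x a * P2 i y b \<le> lam i"
      using h(1) \<open>i \<in> {..<k}\<close> by (simp add: mult.assoc mult_left_le)
  qed
  ultimately show ?thesis using h(2) by simp
qed

lemma abs_sum4:
  fixes f :: "'x \<Rightarrow> 'y \<Rightarrow> 'a \<Rightarrow> 'b \<Rightarrow> real"
  shows "\<bar>\<Sum>x\<in>A. \<Sum>y\<in>B. \<Sum>a\<in>C. \<Sum>b\<in>D. f x y a b\<bar> \<le> (\<Sum>x\<in>A. \<Sum>y\<in>B. \<Sum>a\<in>C. \<Sum>b\<in>D. \<bar>f x y a b\<bar>)"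
proof -
  have 1: "\<And>x y a. \<bar>\<Sum>b\<in>D. f x y a b\<bar> \<le> (\<Sum>b\<in>D. \<bar>f x y a b\<bar>)" by (rule sum_abs)
  have 2: "\<And>x y. \<bar>\<Sum>a\<in>C. \<Sum>b\<in>D. f x y a b\<bar> \<le> (\<Sum>a\<in>C. \<Sum>b\<in>D. \<bar>f x y a b\<bar>)"
    by (rule order_trans[OF sum_abs sum_mono[OF 1]])
  have 3: "\<And>x. \<bar>\<Sum>y\<in>B. \<Sum>a\<in>C. \<Sum>b\<in>D. f x y a b\<bar> \<le> (\<Sum>y\<in>B. \<Sum>a\<in>C. \<Sum>b\<in>D. \<bar>f x y a b\<bar>)"
    by (rule order_trans[OF sum_abs sum_mono[OF 2]])
  show ?thesis by (rule order_trans[OF sum_abs sum_mono[OF 3]])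
qed

definition gsum :: "('x::finite \<Rightarrow> 'y::finite \<Rightarrow> 'a::finite \<Rightarrow> 'b::finite \<Rightarrow> real) \<Rightarrow> ('x \<Rightarrow> 'y \<Rightarrow> 'a \<Rightarrow> 'b \<Rightarrow> real) \<Rightarrow> real" where
  "gsum G P = (\<Sum>x\<in>UNIV. \<Sum>y\<in>UNIV. \<Sum>a\<in>UNIV. \<Sum>b\<in>UNIV. G x y a b * P x y a b)"

lemma cv_bdd:
  fixes G :: "'x::finite \<Rightarrow> 'y::finite \<Rightarrow> 'a::finite \<Rightarrow> 'b::finite \<Rightarrow> real"
  shows "bdd_above ((\<lambda>P. \<bar>gsum G P\<bar>) ` classical_corr)"
proof -
  have "\<forall>P\<in>classical_corr. \<bar>gsum G P\<bar> \<le> gsum (\<lambda>x y a b. \<bar>G x y a b\<bar>) (\<lambda>x y a b. 1)"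
  proof
    fix P :: "'x \<Rightarrow> 'y \<Rightarrow> 'a \<Rightarrow> 'b \<Rightarrow> real" assume P: "P \<in> classical_corr"
    have "\<bar>gsum G P\<bar> \<le> (\<Sum>x\<in>UNIV. \<Sum>y\<in>UNIV. \<Sum>a\<in>UNIV. \<Sum>b\<in>UNIV. \<bar>G x y a b * P x y a b\<bar>)"
      unfolding gsum_def by (rule abs_sum4)
    also have "\<dots> \<le> gsum (\<lambda>x y a b. \<bar>G x y a b\<bar>) (\<lambda>x y a b. 1)"
      unfolding gsum_def using corr_bounds[OF P]
      by (intro sum_mono) (simp add: abs_mult mult_left_le)
    finally show "\<bar>gsum G P\<bar> \<le> gsum (\<lambda>x y a b. \<bar>G x y a b\<bar>) (\<lambda>x y a b. 1)" .
  qed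
  then show ?thesis unfolding bdd_above_def by blast
qed

lemma cv_upper: "P \<in> classical_corr \<Longrightarrow> gsum G P \<le> classical_value G"
proof -
  assume P: "P \<in> classical_corr"
  have "\<bar>gsum G P\<bar> \<le> classical_value G"
    unfolding classical_value_def gsum_def[symmetric] by (rule cSup_upper[OF _ cv_bdd]) (use P in auto)
  then show ?thesis by simp
qed

lemma sum_pull5:
  fixes f :: "'b \<Rightarrow> nat \<Rightarrow> nat \<Rightarrow> nat \<Rightarrow> nat \<Rightarrow> complex"
  shows "(\<Sum>b\<in>S. \<Sum>i<d. \<Sum>j<d. \<Sum>k<d. \<Sum>l<d. f b i j k l) = (\<Sum>i<d. \<Sum>j<d. \<Sum>k<d. \<Sum>l<d. \<Sum>b\<in>S. f b i j k l)"
proof -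
  have "(\<Sum>b\<in>S. \<Sum>i<d. \<Sum>j<d. \<Sum>k<d. \<Sum>l<d. f b i j k l) = (\<Sum>i<d. \<Sum>b\<in>S. \<Sum>j<d. \<Sum>k<d. \<Sum>l<d. f b i j k l)"
    by (rule sum.swap)
  also have "\<dots> = (\<Sum>i<d. \<Sum>j<d. \<Sum>b\<in>S. \<Sum>k<d. \<Sum>l<d. f b i j k l)"
    apply (rule sum.cong[OF refl]) by (rule sum.swap)
  also have "\<dots> = (\<Sum>i<d. \<Sum>j<d. \<Sum>k<d. \<Sum>b\<in>S. \<Sum>l<d. f b i j k l)"
    apply (rule sum.cong[OF refl]) apply (rule sum.cong[OF refl]) by (rule sum.swap)
  also have "\<dots> = (\<Sum>i<d. \<Sum>j<d. \<Sum>k<d. \<Sum>l<d. \<Sum>b\<in>S. f b i j k l)"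
    apply (rule sum.cong[OF refl]) apply (rule sum.cong[OF refl]) apply (rule sum.cong[OF refl]) by (rule sum.swap)
  finally show ?thesis .
qed

lemma te_sumB: "(\<Sum>b\<in>S. tensor_expect d psi A (B b)) = tensor_expect d psi A (\<lambda>j l. \<Sum>b\<in>S. B b j l)"
  unfolding tensor_expect_def sum_pull5 by (simp add: sum_distrib_left sum_distrib_right)

lemma te_sumA: "(\<Sum>a\<in>S. tensor_expect d psi (A a) B) = tensor_expect d psi (\<lambda>i k. \<Sum>a\<in>S. A a i k) B"
  unfolding tensor_expect_def sum_pull5 by (simp add: sum_distrib_left sum_distrib_right)

lemma te_cong:
  assumes "\<And>i k. i < d \<Longrightarrow> k < d \<Longrightarrow> A i k = A' i k" "\<And>j l. j < d \<Longrightarrow> l < d \<Longrightarrow> B j l = B' j l"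
  shows "tensor_expect d psi A B = tensor_expect d psi A' B'"
  unfolding tensor_expect_def using assms by (intro sum.cong refl) auto

abbreviation idm :: "nat \<Rightarrow> nat \<Rightarrow> complex" where
  "idm \<equiv> (\<lambda>i j. if i = j then 1 else 0)"

lemma povm_sum: "povm d A \<Longrightarrow> i < d \<Longrightarrow> j < d \<Longrightarrow> (\<Sum>a\<in>UNIV. A a i j) = idm i j"
  unfolding povm_def by simp

lemma te_id: "tensor_expect d psi idm idm = of_real (\<Sum>i<d. \<Sum>j<d. (cmod (psi i j))\<^sup>2)"
proof -
  have "tensor_expect d psi idm idm = (\<Sum>i<d. \<Sum>j<d. cnj (psi i j) * psi i j)"
  proof -
    have "\<And>i j k. j < d \<Longrightarrow> (\<Sum>l<d. cnj (psi i j) * idm i k * idm j l * psi k l) = cnj (psi i j) * idm i k * psi k j"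
      by (subst sum_one_supp[where i=j]) auto
    moreover have "\<And>i j. i < d \<Longrightarrow> (\<Sum>k<d. cnj (psi i j) * idm i k * psi k j) = cnj (psi i j) * psi i j"
      by (subst sum_one_supp[where i=i]) auto
    ultimately show ?thesis unfolding tensor_expect_def by simp
  qed
  then show ?thesis by (simp add: mult_cnj2)
qed

lemma te_unit: "unit_bipartite d psi \<Longrightarrow> tensor_expect d psi idm idm = 1"
  unfolding te_id unit_bipartite_def by simp

lemma delta_sum: fixes f :: "'a::finite \<Rightarrow> real" shows "(\<Sum>a0\<in>UNIV. f a0 * (if a = a0 then 1 else 0) * g a0) = (f a * g a :: real)"
proof -
  have "(\<Sum>a0\<in>UNIV. f a0 * (if a = a0 then 1 else 0) * g a0) = (\<Sum>a0\<in>UNIV. if a = a0 then f a0 * g a0 else 0)"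
    by (intro sum.cong) auto
  then show ?thesis by (simp add: sum.delta')
qed

lemma delta_sum2: fixes f :: "'a::finite \<Rightarrow> real" shows "(\<Sum>b0\<in>UNIV. f b0 * g b0 * (if b = b0 then 1 else 0)) = (f b * g b :: real)"
proof -
  have "(\<Sum>b0\<in>UNIV. f b0 * g b0 * (if b = b0 then 1 else 0)) = (\<Sum>b0\<in>UNIV. if b = b0 then f b0 * g b0 else 0)"
    by (intro sum.cong) auto
  then show ?thesis by (simp add: sum.delta')
qed

lemma cond_dist_delta: "cond_dist (\<lambda>(x::'x) (a::'a::finite). if a = a0 then 1 else 0)"
  unfolding cond_dist_def by auto

lemma cond_dist_ratio:
  fixes p :: "'y \<Rightarrow> 'b::finite \<Rightarrow> real"
  assumes "\<forall>y b. 0 \<le> p y b" "\<forall>y. (\<Sum>b\<in>UNIV. p y b) = r"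
  shows "cond_dist (\<lambda>y b. if r > 0 then p y b / r else 1 / real CARD('b))"
  unfolding cond_dist_def
proof (cases "r > 0")
  case True then show "(\<forall>x a. 0 \<le> (if r > 0 then p x a / r else 1 / real CARD('b))) \<and> (\<forall>x. (\<Sum>a\<in>UNIV. if r > 0 then p x a / r else 1 / real CARD('b)) = 1)"
    using assms by (simp add: sum_divide_distrib[symmetric])
next
  case False then show "(\<forall>x a. 0 \<le> (if r > 0 then p x a / r else 1 / real CARD('b))) \<and> (\<forall>x. (\<Sum>a\<in>UNIV. if r > 0 then p x a / r else 1 / real CARD('b)) = 1)"
    by simp
qed

lemma coreA:
  fixes p :: "'y \<Rightarrow> 'a::finite \<Rightarrow> 'b::finite \<Rightarrow> real" and r :: "'a \<Rightarrow> real"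
  assumes nn: "\<forall>y a b. 0 \<le> p y a b" and sr: "\<forall>y a. (\<Sum>b\<in>UNIV. p y a b) = r a" and s1: "(\<Sum>a\<in>UNIV. r a) = 1"
  shows "(\<lambda>(x::'x) y a b. p y a b) \<in> classical_corr"
proof -
  define q where "q = (\<lambda>a0 y b. if r a0 > 0 then p y a0 b / r a0 else 1 / real CARD('b))"
  have rnn: "\<And>a. 0 \<le> r a" using sr nn by (metis sum_nonneg)
  have pz: "\<And>y a b. r a = 0 \<Longrightarrow> p y a b = 0"
  proof -
    fix y a b assume "r a = 0"
    have "p y a b \<le> (\<Sum>b\<in>UNIV. p y a b)" by (rule member_le_sum) (use nn in auto)
    then show "p y a b = 0" using \<open>r a = 0\<close> sr nn by (metis order_antisym)
  qed
  have "(\<lambda>(x::'x) y a b. \<Sum>a0\<in>UNIV. r a0 * (if a = a0 then 1 else 0) * q a0 y b) \<in> classical_corr"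
    by (rule mix_corr) (auto simp: rnn s1 cond_dist_delta q_def intro!: cond_dist_ratio[where r="r _"] nn[rule_format] sr[rule_format])
  moreover have "(\<lambda>(x::'x) y a b. \<Sum>a0\<in>UNIV. r a0 * (if a = a0 then 1 else 0) * q a0 y b) = (\<lambda>x y a b. p y a b)"
  proof (intro ext)
    fix x :: 'x and y a b
    show "(\<Sum>a0\<in>UNIV. r a0 * (if a = a0 then 1 else 0) * q a0 y b) = p y a b"
      unfolding delta_sum q_def using rnn[of a] pz[of a y b] by (auto simp: less_le)
  qed
  ultimately show ?thesis by simp
qed

lemma coreB:
  fixes p :: "'x \<Rightarrow> 'b::finite \<Rightarrow> 'a::finite \<Rightarrow> real" and r :: "'b \<Rightarrow> real"
  assumes nn: "\<forall>x b a. 0 \<le> p x b a" and sr: "\<forall>x b. (\<Sum>a\<in>UNIV. p x b a) = r b" and s1: "(\<Sum>b\<in>UNIV. r b) = 1"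
  shows "(\<lambda>x (y::'y) a b. p x b a) \<in> classical_corr"
proof -
  define q where "q = (\<lambda>b0 x a. if r b0 > 0 then p x b0 a / r b0 else 1 / real CARD('a))"
  have rnn: "\<And>b. 0 \<le> r b" using sr nn by (metis sum_nonneg)
  have pz: "\<And>x b a. r b = 0 \<Longrightarrow> p x b a = 0"
  proof -
    fix x b a assume "r b = 0"
    have "p x b a \<le> (\<Sum>a\<in>UNIV. p x b a)" by (rule member_le_sum) (use nn in auto)
    then show "p x b a = 0" using \<open>r b = 0\<close> sr nn by (metis order_antisym)
  qed
  have "(\<lambda>x (y::'y) a b. \<Sum>b0\<in>UNIV. r b0 * q b0 x a * (if b = b0 then 1 else 0)) \<in> classical_corr"
    by (rule mix_corr) (auto simp: rnn s1 cond_dist_delta q_def intro!: cond_dist_ratio[where r="r _"] nn[rule_format] sr[rule_format])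
  moreover have "(\<lambda>x (y::'y) a b. \<Sum>b0\<in>UNIV. r b0 * q b0 x a * (if b = b0 then 1 else 0)) = (\<lambda>x y a b. p x b a)"
  proof (intro ext)
    fix x and y :: 'y and a b
    show "(\<Sum>b0\<in>UNIV. r b0 * q b0 x a * (if b = b0 then 1 else 0)) = p x b a"
      unfolding delta_sum2 q_def using rnn[of b] pz[of b x a] by (auto simp: less_le)
  qed
  ultimately show ?thesis by simp
qed

lemma povm_psd: "povm d A \<Longrightarrow> psd d (A a)" unfolding povm_def by simp

lemma te_real:
  assumes "psd d A" "psd d B"
  shows "tensor_expect d psi A B = of_real (Re (tensor_expect d psi A B))"
  using te_nonneg[OF assms] by (simp add: complex_is_Real_iff complex_eq_iff)

context
  fixes G :: "'x::finite \<Rightarrow> 'y::finite \<Rightarrow> 'a::finite \<Rightarrow> 'b::finite \<Rightarrow> real"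
    and A :: "'x \<Rightarrow> 'a \<Rightarrow> nat \<Rightarrow> nat \<Rightarrow> complex" and B :: "'y \<Rightarrow> 'b \<Rightarrow> nat \<Rightarrow> nat \<Rightarrow> complex"
    and d :: nat and psi :: "nat \<Rightarrow> nat \<Rightarrow> complex"
  assumes Gnn: "\<forall>x y a b. 0 \<le> G x y a b" and unit: "unit_bipartite d psi"
    and pA: "\<forall>x. povm d (A x)" and pB: "\<forall>y. povm d (B y)"
begin

definition pp :: "'x \<Rightarrow> 'y \<Rightarrow> 'a \<Rightarrow> 'b \<Rightarrow> real" where
  "pp x y a b = Re (tensor_expect d psi (A x a) (B y b))"

lemma pp_nn: "0 \<le> pp x y a b"
  unfolding pp_def using te_nonneg[OF povm_psd povm_psd] pA pB by blast

lemma te_pp: "tensor_expect d psi (A x a) (B y b) = of_real (pp x y a b)"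
  unfolding pp_def using te_real[OF povm_psd povm_psd] pA pB by blast

lemma qsum_eq: "cmod (\<Sum>x\<in>UNIV. \<Sum>y\<in>UNIV. \<Sum>a\<in>UNIV. \<Sum>b\<in>UNIV. complex_of_real (G x y a b) * tensor_expect d psi (A x a) (B y b))
   = (\<Sum>x\<in>UNIV. \<Sum>y\<in>UNIV. \<Sum>a\<in>UNIV. \<Sum>b\<in>UNIV. G x y a b * pp x y a b)"
proof -
  have "(\<Sum>x\<in>UNIV. \<Sum>y\<in>UNIV. \<Sum>a\<in>UNIV. \<Sum>b\<in>UNIV. complex_of_real (G x y a b) * tensor_expect d psi (A x a) (B y b))
     = of_real (\<Sum>x\<in>UNIV. \<Sum>y\<in>UNIV. \<Sum>a\<in>UNIV. \<Sum>b\<in>UNIV. G x y a b * pp x y a b)"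
    unfolding te_pp by simp
  moreover have "0 \<le> (\<Sum>x\<in>UNIV. \<Sum>y\<in>UNIV. \<Sum>a\<in>UNIV. \<Sum>b\<in>UNIV. G x y a b * pp x y a b)"
    using Gnn pp_nn by (intro sum_nonneg) auto
  ultimately show ?thesis by (simp only: norm_of_real abs_of_nonneg)
qed

lemma sumB_pp: "(\<Sum>b\<in>UNIV. pp x y a b) = Re (tensor_expect d psi (A x a) idm)"
proof -
  have "(\<Sum>b\<in>UNIV. tensor_expect d psi (A x a) (B y b)) = tensor_expect d psi (A x a) idm"
    unfolding te_sumB by (rule te_cong) (auto simp: povm_sum[OF pB[rule_format, of y]])
  then show ?thesis unfolding pp_def by (metis Re_sum)
qed

lemma sumA_pp: "(\<Sum>a\<in>UNIV. pp x y a b) = Re (tensor_expect d psi idm (B y b))"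
proof -
  have "(\<Sum>a\<in>UNIV. tensor_expect d psi (A x a) (B y b)) = tensor_expect d psi idm (B y b)"
    unfolding te_sumA by (rule te_cong) (auto simp: povm_sum[OF pA[rule_format, of x]])
  then show ?thesis unfolding pp_def by (metis Re_sum)
qed

lemma sum_rA: "(\<Sum>a\<in>UNIV. Re (tensor_expect d psi (A x a) idm)) = 1"
proof -
  have "(\<Sum>a\<in>UNIV. tensor_expect d psi (A x a) idm) = tensor_expect d psi idm idm"
    unfolding te_sumA by (rule te_cong) (auto simp: povm_sum[OF pA[rule_format, of x]])
  then show ?thesis using te_unit[OF unit] by (metis Re_sum one_complex.simps(1))
qed

lemma sum_rB: "(\<Sum>b\<in>UNIV. Re (tensor_expect d psi idm (B y b))) = 1"
proof -
  have "(\<Sum>b\<in>UNIV. tensor_expect d psi idm (B y b)) = tensor_expect d psi idm idm"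
    unfolding te_sumB by (rule te_cong) (auto simp: povm_sum[OF pB[rule_format, of y]])
  then show ?thesis using te_unit[OF unit] by (metis Re_sum one_complex.simps(1))
qed

lemma part1x: "(\<Sum>x\<in>UNIV. \<Sum>y\<in>UNIV. \<Sum>a\<in>UNIV. \<Sum>b\<in>UNIV. G x y a b * pp x y a b) \<le> real CARD('x) * classical_value G"
proof -
  have slice: "(\<Sum>y\<in>UNIV. \<Sum>a\<in>UNIV. \<Sum>b\<in>UNIV. G x0 y a b * pp x0 y a b) \<le> classical_value G" for x0
  proof -
    have corr: "(\<lambda>(x::'x) y a b. pp x0 y a b) \<in> classical_corr"
      by (rule coreA[where r="\<lambda>a. Re (tensor_expect d psi (A x0 a) idm)"])
        (use pp_nn sumB_pp sum_rA in auto)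
    have "(\<Sum>y\<in>UNIV. \<Sum>a\<in>UNIV. \<Sum>b\<in>UNIV. G x0 y a b * pp x0 y a b)
       \<le> (\<Sum>x\<in>UNIV. \<Sum>y\<in>UNIV. \<Sum>a\<in>UNIV. \<Sum>b\<in>UNIV. G x y a b * pp x0 y a b)"
      by (rule member_le_sum[where f="\<lambda>x. \<Sum>y\<in>UNIV. \<Sum>a\<in>UNIV. \<Sum>b\<in>UNIV. G x y a b * pp x0 y a b"])
        (use Gnn pp_nn in \<open>auto intro!: sum_nonneg\<close>)
    also have "\<dots> \<le> classical_value G"
      using cv_upper[OF corr, of G] unfolding gsum_def .
    finally show ?thesis .
  qed
  have "(\<Sum>x\<in>UNIV. \<Sum>y\<in>UNIV. \<Sum>a\<in>UNIV. \<Sum>b\<in>UNIV. G x y a b * pp x y a b) \<le> (\<Sum>x\<in>(UNIV::'x set). classical_value G)"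
    by (rule sum_mono) (rule slice)
  then show ?thesis by simp
qed

lemma part1y: "(\<Sum>x\<in>UNIV. \<Sum>y\<in>UNIV. \<Sum>a\<in>UNIV. \<Sum>b\<in>UNIV. G x y a b * pp x y a b) \<le> real CARD('y) * classical_value G"
proof -
  have slice: "(\<Sum>x\<in>UNIV. \<Sum>a\<in>UNIV. \<Sum>b\<in>UNIV. G x y0 a b * pp x y0 a b) \<le> classical_value G" for y0
  proof -
    have corr: "(\<lambda>x (y::'y) a b. (\<lambda>x b a. pp x y0 a b) x b a) \<in> classical_corr"
      by (rule coreB[where r="\<lambda>b. Re (tensor_expect d psi idm (B y0 b))"])
        (use pp_nn sumA_pp sum_rB in auto)
    have "(\<Sum>x\<in>UNIV. \<Sum>a\<in>UNIV. \<Sum>b\<in>UNIV. G x y0 a b * pp x y0 a b)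
       \<le> (\<Sum>x\<in>UNIV. \<Sum>y\<in>UNIV. \<Sum>a\<in>UNIV. \<Sum>b\<in>UNIV. G x y a b * pp x y0 a b)"
    proof (rule sum_mono)
      fix x :: 'x
      show "(\<Sum>a\<in>UNIV. \<Sum>b\<in>UNIV. G x y0 a b * pp x y0 a b) \<le> (\<Sum>y\<in>UNIV. \<Sum>a\<in>UNIV. \<Sum>b\<in>UNIV. G x y a b * pp x y0 a b)"
        by (rule member_le_sum[where f="\<lambda>y. \<Sum>a\<in>UNIV. \<Sum>b\<in>UNIV. G x y a b * pp x y0 a b"])
          (use Gnn pp_nn in \<open>auto intro!: sum_nonneg\<close>)
    qed
    also have "\<dots> \<le> classical_value G"
      using cv_upper[OF corr, of G] unfolding gsum_def by simp
    finally show ?thesis .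
  qed
  have "(\<Sum>x\<in>UNIV. \<Sum>y\<in>UNIV. \<Sum>a\<in>UNIV. \<Sum>b\<in>UNIV. G x y a b * pp x y a b)
      = (\<Sum>y\<in>UNIV. \<Sum>x\<in>UNIV. \<Sum>a\<in>UNIV. \<Sum>b\<in>UNIV. G x y a b * pp x y a b)"
    by (rule sum.swap)
  also have "\<dots> \<le> (\<Sum>y\<in>(UNIV::'y set). classical_value G)"
    by (rule sum_mono) (rule slice)
  finally show ?thesis by simp
qed

end

lemma te_uv:
  assumes "psd d A"
  shows "tensor_expect d psi A B = (\<Sum>i<d. \<Sum>j<d. cnj (\<Sum>k<d. A i k * psi k j) * (\<Sum>l<d. B j l * psi i l))"
proof -
  let ?t = "\<lambda>i j k l. cnj (psi i j) * A i k * B j l * psi k l"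
  have "(\<Sum>i<d. \<Sum>j<d. cnj (\<Sum>k<d. A i k * psi k j) * (\<Sum>l<d. B j l * psi i l))
      = (\<Sum>i<d. \<Sum>j<d. \<Sum>k<d. \<Sum>l<d. ?t k j i l)"
  proof (intro sum.cong refl)
    fix i j assume i: "i \<in> {..<d}" and j: "j \<in> {..<d}"
    have "cnj (\<Sum>k<d. A i k * psi k j) * (\<Sum>l<d. B j l * psi i l) = (\<Sum>k<d. \<Sum>l<d. cnj (A i k) * cnj (psi k j) * (B j l * psi i l))"
      apply (simp add: cnj_sum sum_distrib_left sum_distrib_right) by (rule sum.swap)
    also have "\<dots> = (\<Sum>k<d. \<Sum>l<d. ?t k j i l)"
    proof (intro sum.cong refl)
      fix k l assume k: "k \<in> {..<d}"
      have "A k i = cnj (A i k)" using psd_herm[OF assms, of i k] i k by simp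
      then show "cnj (A i k) * cnj (psi k j) * (B j l * psi i l) = ?t k j i l" by (simp add: algebra_simps)
    qed
    finally show "cnj (\<Sum>k<d. A i k * psi k j) * (\<Sum>l<d. B j l * psi i l) = (\<Sum>k<d. \<Sum>l<d. ?t k j i l)" .
  qed
  also have "\<dots> = (\<Sum>i<d. \<Sum>k<d. \<Sum>j<d. \<Sum>l<d. ?t k j i l)"
    apply (rule sum.cong[OF refl]) by (rule sum.swap)
  also have "\<dots> = (\<Sum>k<d. \<Sum>i<d. \<Sum>j<d. \<Sum>l<d. ?t k j i l)"
    by (rule sum.swap)
  also have "\<dots> = (\<Sum>k<d. \<Sum>j<d. \<Sum>i<d. \<Sum>l<d. ?t k j i l)"
    apply (rule sum.cong[OF refl]) by (rule sum.swap)
  also have "\<dots> = tensor_expect d psi A B" unfolding tensor_expect_def ..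
  finally show ?thesis ..
qed

lemma qf_sum: "qf d (\<lambda>i j. \<Sum>a\<in>S. M a i j) v w = (\<Sum>a\<in>S. qf d (M a) v w)"
proof -
  have "qf d (\<lambda>i j. \<Sum>a\<in>S. M a i j) v w = (\<Sum>i<d. \<Sum>j<d. \<Sum>a\<in>S. cnj (v i) * M a i j * w j)"
    unfolding qf_def by (simp add: sum_distrib_left sum_distrib_right)
  also have "\<dots> = (\<Sum>i<d. \<Sum>a\<in>S. \<Sum>j<d. cnj (v i) * M a i j * w j)"
    apply (rule sum.cong[OF refl]) by (rule sum.swap)
  also have "\<dots> = (\<Sum>a\<in>S. qf d (M a) v w)" unfolding qf_def by (rule sum.swap)
  finally show ?thesis .
qed

lemma povm_compl_psd:
  fixes A :: "'a::finite \<Rightarrow> nat \<Rightarrow> nat \<Rightarrow> complex"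
  assumes "povm d A"
  shows "psd d (\<lambda>i j. idm i j - A a i j)"
  unfolding psd_iff_qf
proof
  fix v
  have "qf d (\<lambda>i j. idm i j - A a i j) v v = qf d (\<lambda>i j. \<Sum>a'\<in>UNIV. A a' i j) v v - qf d (A a) v v"
    unfolding qf_diff using povm_sum[OF assms] by (intro arg_cong2[where f="(-)"] qf_cong) auto
  also have "\<dots> = (\<Sum>a'\<in>UNIV - {a}. qf d (A a') v v)"
    unfolding qf_sum by (simp add: sum.remove[where x=a])
  finally have e: "qf d (\<lambda>i j. idm i j - A a i j) v v = (\<Sum>a'\<in>UNIV - {a}. qf d (A a') v v)" .
  have "\<forall>a'. qf d (A a') v v \<in> \<real> \<and> 0 \<le> Re (qf d (A a') v v)"
    using psdD[OF povm_psd[OF assms]] by blast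
  then show "qf d (\<lambda>i j. idm i j - A a i j) v v \<in> \<real> \<and> 0 \<le> Re (qf d (\<lambda>i j. idm i j - A a i j) v v)"
    unfolding e by (auto intro!: sum_in_Reals sum_nonneg simp: Re_sum)
qed

lemma povm_mv_sum:
  fixes A :: "'a::finite \<Rightarrow> nat \<Rightarrow> nat \<Rightarrow> complex"
  assumes "povm d A"
  shows "(\<Sum>a\<in>UNIV. nv d (mv d (A a) w)) \<le> nv d w"
proof -
  have "(\<Sum>a\<in>UNIV. nv d (mv d (A a) w)) \<le> (\<Sum>a\<in>UNIV. Re (qf d (A a) w w))"
    by (intro sum_mono norm_mv_le povm_psd[OF assms] povm_compl_psd[OF assms])
  also have "\<dots> = Re (qf d (\<lambda>i j. \<Sum>a\<in>UNIV. A a i j) w w)"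
    unfolding qf_sum by (simp add: Re_sum)
  also have "\<dots> = Re (qf d idm w w)"
    using povm_sum[OF assms] by (intro arg_cong[where f=Re] qf_cong) auto
  also have "\<dots> = nv d w" unfolding qf_id by simp
  finally show ?thesis .
qed

lemma prod_corr:
  fixes P1 :: "'x \<Rightarrow> 'a::finite \<Rightarrow> real" and P2 :: "'y \<Rightarrow> 'b::finite \<Rightarrow> real"
  assumes "cond_dist P1" "cond_dist P2"
  shows "(\<lambda>x y a b. P1 x a * P2 y b) \<in> classical_corr"
proof -
  have "(\<lambda>x y a b. \<Sum>i\<in>(UNIV::unit set). 1 * P1 x a * P2 y b) \<in> classical_corr"
    by (rule mix_corr) (use assms in auto)
  then show ?thesis by simp
qed

lemma pad_dist:
  fixes al :: "'x \<Rightarrow> 'a::finite \<Rightarrow> real"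
  assumes "\<forall>x. (\<Sum>a\<in>UNIV. (al x a)\<^sup>2) \<le> 1"
  shows "cond_dist (\<lambda>x a. (al x a)\<^sup>2 + (1 - (\<Sum>a\<in>UNIV. (al x a)\<^sup>2)) / real CARD('a))"
  unfolding cond_dist_def
proof (intro conjI allI)
  fix x a
  show "0 \<le> (al x a)\<^sup>2 + (1 - (\<Sum>a\<in>UNIV. (al x a)\<^sup>2)) / real CARD('a)"
    using assms by (intro add_nonneg_nonneg divide_nonneg_nonneg) auto
next
  fix x
  show "(\<Sum>a\<in>UNIV. (al x a)\<^sup>2 + (1 - (\<Sum>a\<in>UNIV. (al x a)\<^sup>2)) / real CARD('a)) = 1"
    by (simp add: sum.distrib)
qed

lemma unif_dist: "cond_dist (\<lambda>(x::'x) (a::'a::finite). 1 / real CARD('a))"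
  unfolding cond_dist_def by simp

context
  fixes G :: "'x::finite \<Rightarrow> 'y::finite \<Rightarrow> 'a::finite \<Rightarrow> 'b::finite \<Rightarrow> real"
  assumes Gnn: "\<forall>x y a b. 0 \<le> G x y a b"
begin

lemma sqA:
  fixes al :: "'x \<Rightarrow> 'a \<Rightarrow> real"
  assumes als: "\<forall>x. (\<Sum>a\<in>UNIV. (al x a)\<^sup>2) \<le> 1"
  shows "(\<Sum>x\<in>UNIV. \<Sum>y\<in>UNIV. \<Sum>a\<in>UNIV. \<Sum>b\<in>UNIV. G x y a b * (al x a)\<^sup>2) \<le> real CARD('b) * classical_value G"
proof -
  define P1 where "P1 = (\<lambda>x a. (al x a)\<^sup>2 + (1 - (\<Sum>a\<in>UNIV. (al x a)\<^sup>2)) / real CARD('a))"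
  have c: "(\<lambda>x (y::'y) a (b::'b). P1 x a * (1 / real CARD('b))) \<in> classical_corr"
    apply (rule prod_corr) unfolding P1_def by (rule pad_dist[OF als], rule unif_dist)
  have le: "\<And>x a. (al x a)\<^sup>2 \<le> P1 x a"
    unfolding P1_def using als by (simp add: divide_nonneg_nonneg)
  have "(\<Sum>x\<in>UNIV. \<Sum>y\<in>UNIV. \<Sum>a\<in>UNIV. \<Sum>b\<in>UNIV. G x y a b * (al x a)\<^sup>2)
      \<le> (\<Sum>x\<in>UNIV. \<Sum>y\<in>UNIV. \<Sum>a\<in>UNIV. \<Sum>b\<in>UNIV. G x y a b * P1 x a)"
    using Gnn le by (intro sum_mono mult_left_mono) auto
  also have "\<dots> = real CARD('b) * gsum G (\<lambda>x y a b. P1 x a * (1 / real CARD('b)))"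
  proof -
    have "gsum G (\<lambda>x y a b. P1 x a * (1 / real CARD('b))) = (\<Sum>x\<in>UNIV. \<Sum>y\<in>UNIV. \<Sum>a\<in>UNIV. \<Sum>b\<in>UNIV. G x y a b * P1 x a) / real CARD('b)"
      unfolding gsum_def by (simp add: sum_divide_distrib)
    then show ?thesis by simp
  qed
  also have "\<dots> \<le> real CARD('b) * classical_value G"
    by (rule mult_left_mono[OF cv_upper[OF c]]) simp
  finally show ?thesis .
qed

lemma sqB:
  fixes be :: "'y \<Rightarrow> 'b \<Rightarrow> real"
  assumes bes: "\<forall>y. (\<Sum>b\<in>UNIV. (be y b)\<^sup>2) \<le> 1"
  shows "(\<Sum>x\<in>UNIV. \<Sum>y\<in>UNIV. \<Sum>a\<in>UNIV. \<Sum>b\<in>UNIV. G x y a b * (be y b)\<^sup>2) \<le> real CARD('a) * classical_value G"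
proof -
  define P2 where "P2 = (\<lambda>y b. (be y b)\<^sup>2 + (1 - (\<Sum>b\<in>UNIV. (be y b)\<^sup>2)) / real CARD('b))"
  have c: "(\<lambda>(x::'x) y (a::'a) b. (1 / real CARD('a)) * P2 y b) \<in> classical_corr"
    apply (rule prod_corr) unfolding P2_def by (rule unif_dist, rule pad_dist[OF bes])
  have le: "\<And>y b. (be y b)\<^sup>2 \<le> P2 y b"
    unfolding P2_def using bes by (simp add: divide_nonneg_nonneg)
  have "(\<Sum>x\<in>UNIV. \<Sum>y\<in>UNIV. \<Sum>a\<in>UNIV. \<Sum>b\<in>UNIV. G x y a b * (be y b)\<^sup>2)
      \<le> (\<Sum>x\<in>UNIV. \<Sum>y\<in>UNIV. \<Sum>a\<in>UNIV. \<Sum>b\<in>UNIV. G x y a b * P2 y b)"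
    using Gnn le by (intro sum_mono mult_left_mono) auto
  also have "\<dots> = real CARD('a) * gsum G (\<lambda>x y a b. (1 / real CARD('a)) * P2 y b)"
  proof -
    have "gsum G (\<lambda>x y a b. (1 / real CARD('a)) * P2 y b) = (\<Sum>x\<in>UNIV. \<Sum>y\<in>UNIV. \<Sum>a\<in>UNIV. \<Sum>b\<in>UNIV. G x y a b * P2 y b) / real CARD('a)"
      unfolding gsum_def by (simp add: sum_divide_distrib)
    then show ?thesis by simp
  qed
  also have "\<dots> \<le> real CARD('a) * classical_value G"
    by (rule mult_left_mono[OF cv_upper[OF c]]) simp
  finally show ?thesis .
qed

lemma amgm_cv:
  fixes al :: "'x \<Rightarrow> 'a \<Rightarrow> real" and be :: "'y \<Rightarrow> 'b \<Rightarrow> real"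
  assumes aln: "\<forall>x a. 0 \<le> al x a" and ben: "\<forall>y b. 0 \<le> be y b"
    and als: "\<forall>x. (\<Sum>a\<in>UNIV. (al x a)\<^sup>2) \<le> 1" and bes: "\<forall>y. (\<Sum>b\<in>UNIV. (be y b)\<^sup>2) \<le> 1"
  shows "(\<Sum>x\<in>UNIV. \<Sum>y\<in>UNIV. \<Sum>a\<in>UNIV. \<Sum>b\<in>UNIV. G x y a b * (al x a * be y b))
     \<le> sqrt (real (CARD('a) * CARD('b))) * classical_value G"
proof -
  define t where "t = sqrt (real CARD('a)) / sqrt (real CARD('b))"
  have tp: "t > 0" unfolding t_def by simp
  have pw: "\<And>p q. p * q \<le> (t * p\<^sup>2 + q\<^sup>2 / t) / 2"
  proof -
    fix p q :: real
    have "0 \<le> (t * p - q)\<^sup>2" by simp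
    then have "2 * t * (p * q) \<le> t * (t * p\<^sup>2) + q\<^sup>2" by (simp add: power2_eq_square algebra_simps)
    then show "p * q \<le> (t * p\<^sup>2 + q\<^sup>2 / t) / 2" using tp by (simp add: field_simps)
  qed
  have "(\<Sum>x\<in>UNIV. \<Sum>y\<in>UNIV. \<Sum>a\<in>UNIV. \<Sum>b\<in>UNIV. G x y a b * (al x a * be y b))
     \<le> (\<Sum>x\<in>UNIV. \<Sum>y\<in>UNIV. \<Sum>a\<in>UNIV. \<Sum>b\<in>UNIV. G x y a b * ((t * (al x a)\<^sup>2 + (be y b)\<^sup>2 / t) / 2))"
    using Gnn pw by (intro sum_mono mult_left_mono) auto
  also have "\<dots> = t / 2 * (\<Sum>x\<in>UNIV. \<Sum>y\<in>UNIV. \<Sum>a\<in>UNIV. \<Sum>b\<in>UNIV. G x y a b * (al x a)\<^sup>2)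
     + 1 / (2 * t) * (\<Sum>x\<in>UNIV. \<Sum>y\<in>UNIV. \<Sum>a\<in>UNIV. \<Sum>b\<in>UNIV. G x y a b * (be y b)\<^sup>2)"
  proof -
    have e: "\<And>x y a b. G x y a b * ((t * (al x a)\<^sup>2 + (be y b)\<^sup>2 / t) / 2) = t / 2 * (G x y a b * (al x a)\<^sup>2) + 1 / (2 * t) * (G x y a b * (be y b)\<^sup>2)"
      using tp by (simp add: field_simps)
    show ?thesis unfolding e by (simp add: sum.distrib sum_distrib_left)
  qed
  also have "\<dots> \<le> t / 2 * (real CARD('b) * classical_value G) + 1 / (2 * t) * (real CARD('a) * classical_value G)"
    using sqA[OF als] sqB[OF bes] tp by (intro add_mono mult_left_mono) auto
  also have "\<dots> = sqrt (real (CARD('a) * CARD('b))) * classical_value G"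
  proof -
    define sa where "sa = sqrt (real CARD('a))"
    define sb where "sb = sqrt (real CARD('b))"
    have a: "real CARD('a) = sa * sa" unfolding sa_def by simp
    have b: "real CARD('b) = sb * sb" unfolding sb_def by simp
    have pa: "sa > 0" "sb > 0" unfolding sa_def sb_def by auto
    have "t / 2 * real CARD('b) + 1 / (2 * t) * real CARD('a) = sa * sb"
      unfolding t_def sa_def[symmetric] sb_def[symmetric] a b using pa by (simp add: field_simps)
    moreover have "sqrt (real (CARD('a) * CARD('b))) = sa * sb" unfolding sa_def sb_def by (simp add: real_sqrt_mult)
    moreover have "t / 2 * (real CARD('b) * classical_value G) + 1 / (2 * t) * (real CARD('a) * classical_value G)
       = (t / 2 * real CARD('b) + 1 / (2 * t) * real CARD('a)) * classical_value G"
      by (simp add: algebra_simps)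
    ultimately show ?thesis by simp
  qed
  finally show ?thesis .
qed

end

lemma Bset_le_Cs: "Sup (Bset n m c) \<le> Cs n m c"
proof (rule cSup_least[OF Bset_ne])
  fix z assume "z \<in> Bset n m c"
  then obtain s t where z: "z = cmod (\<Sum>x<n. \<Sum>y<m. c x y * s x * t y)"
    and st: "\<forall>x<n. cmod (s x) \<le> 1" "\<forall>y<m. cmod (t y) \<le> 1" unfolding Bset_def by blast
  have "z \<le> (\<Sum>x<n. \<Sum>y<m. cmod (c x y * s x * t y))"
    unfolding z by (rule order_trans[OF norm_sum sum_mono]) (rule norm_sum)
  also have "\<dots> \<le> Cs n m c" unfolding Cs_def
  proof (intro sum_mono)
    fix x y assume "x \<in> {..<n}" "y \<in> {..<m}"
    then have "cmod (s x) \<le> 1" "cmod (t y) \<le> 1" using st by auto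
    then have "cmod (s x) * cmod (t y) \<le> 1" by (intro mult_le_one) auto
    then show "cmod (c x y * s x * t y) \<le> cmod (c x y)"
      by (simp add: norm_mult mult.assoc mult_left_le)
  qed
  finally show "z \<le> Cs n m c" .
qed

lemma groth_K_nonneg:
  assumes "groth_ineq_C K" shows "0 \<le> K"
proof (rule ccontr)
  assume "\<not> 0 \<le> K"
  let ?c = "\<lambda>x y. 1 :: complex"
  note h = assms[unfolded groth_ineq_C_def, rule_format, where n=1 and m=1 and c="?c" and d=1 and a="\<lambda>x i. 1" and b="\<lambda>y i. 1"]
  have le: "1 \<le> K * Sup (Bset 1 1 ?c)" using h unfolding Bset_def by simp
  have "0 \<le> Sup (Bset 1 1 ?c)"
    using in_Bset_le[where n=1 and m=1 and s="\<lambda>x. 0" and t="\<lambda>y. 0" and c="?c"] by simp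
  then have "K * Sup (Bset 1 1 ?c) \<le> 0" using \<open>\<not> 0 \<le> K\<close> by (simp add: mult_nonpos_nonneg)
  with le show False by simp
qed

lemma sum_pairs_UNIV: "(\<Sum>p\<in>(UNIV::('x::finite \<times> 'a::finite) set). f p) = (\<Sum>x\<in>UNIV. \<Sum>a\<in>UNIV. f (x, a))"
  by (simp add: sum.cartesian_product UNIV_Times_UNIV[symmetric] del: UNIV_Times_UNIV)

lemma sum_pairs_lt: "(\<Sum>p\<in>{..<d} \<times> {..<d}. f p) = (\<Sum>i<d. \<Sum>j<d. f (i, j))"
  by (simp add: sum.cartesian_product)

lemma enum_ex: "finite S \<Longrightarrow> \<exists>e. bij_betw e {..<card S} S"
  using ex_bij_betw_nat_finite unfolding atLeast0LessThan by blast

context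
  fixes G :: "'x::finite \<Rightarrow> 'y::finite \<Rightarrow> 'a::finite \<Rightarrow> 'b::finite \<Rightarrow> real"
    and A :: "'x \<Rightarrow> 'a \<Rightarrow> nat \<Rightarrow> nat \<Rightarrow> complex" and B :: "'y \<Rightarrow> 'b \<Rightarrow> nat \<Rightarrow> nat \<Rightarrow> complex"
    and d :: nat and psi :: "nat \<Rightarrow> nat \<Rightarrow> complex"
  assumes Gnn: "\<forall>x y a b. 0 \<le> G x y a b" and unit: "unit_bipartite d psi"
    and pA: "\<forall>x. povm d (A x)" and pB: "\<forall>y. povm d (B y)"
begin

definition uu :: "'x \<Rightarrow> 'a \<Rightarrow> nat \<Rightarrow> nat \<Rightarrow> complex" where
  "uu x a i j = (\<Sum>k<d. A x a i k * psi k j)"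
definition vv :: "'y \<Rightarrow> 'b \<Rightarrow> nat \<Rightarrow> nat \<Rightarrow> complex" where
  "vv y b i j = (\<Sum>l<d. B y b j l * psi i l)"
definition nU :: "'x \<Rightarrow> 'a \<Rightarrow> real" where
  "nU x a = (\<Sum>i<d. \<Sum>j<d. (cmod (uu x a i j))\<^sup>2)"
definition nV :: "'y \<Rightarrow> 'b \<Rightarrow> real" where
  "nV y b = (\<Sum>i<d. \<Sum>j<d. (cmod (vv y b i j))\<^sup>2)"

lemma te_uuvv: "tensor_expect d psi (A x a) (B y b) = (\<Sum>i<d. \<Sum>j<d. cnj (uu x a i j) * vv y b i j)"
  unfolding uu_def vv_def using pA by (intro te_uv povm_psd) auto

lemma nU_nn: "0 \<le> nU x a" unfolding nU_def by (intro sum_nonneg) auto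
lemma nV_nn: "0 \<le> nV y b" unfolding nV_def by (intro sum_nonneg) auto

lemma psi_norm: "(\<Sum>i<d. \<Sum>j<d. (cmod (psi i j))\<^sup>2) = 1"
  using unit unfolding unit_bipartite_def .

lemma nU_sum: "(\<Sum>a\<in>UNIV. nU x a) \<le> 1"
proof -
  have e: "nU x a = (\<Sum>j<d. nv d (mv d (A x a) (\<lambda>k. psi k j)))" for a
    unfolding nU_def nv_def mv_def uu_def by (rule sum.swap)
  have "(\<Sum>a\<in>UNIV. nU x a) = (\<Sum>j<d. \<Sum>a\<in>UNIV. nv d (mv d (A x a) (\<lambda>k. psi k j)))"
    unfolding e by (rule sum.swap)
  also have "\<dots> \<le> (\<Sum>j<d. nv d (\<lambda>k. psi k j))"
    by (rule sum_mono, rule povm_mv_sum) (use pA in auto)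
  also have "\<dots> = (\<Sum>i<d. \<Sum>j<d. (cmod (psi i j))\<^sup>2)" unfolding nv_def by (rule sum.swap)
  also have "\<dots> = 1" using psi_norm .
  finally show ?thesis .
qed

lemma nV_sum: "(\<Sum>b\<in>UNIV. nV y b) \<le> 1"
proof -
  have e: "nV y b = (\<Sum>i<d. nv d (mv d (B y b) (psi i)))" for b
    unfolding nV_def nv_def mv_def vv_def ..
  have "(\<Sum>b\<in>UNIV. nV y b) = (\<Sum>i<d. \<Sum>b\<in>UNIV. nv d (mv d (B y b) (psi i)))"
    unfolding e by (rule sum.swap)
  also have "\<dots> \<le> (\<Sum>i<d. nv d (psi i))"
    by (rule sum_mono, rule povm_mv_sum) (use pB in auto)
  also have "\<dots> = 1" unfolding nv_def using psi_norm .
  finally show ?thesis .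
qed

lemma te_zero:
  assumes "nU x a = 0 \<or> nV y b = 0"
  shows "tensor_expect d psi (A x a) (B y b) = 0"
proof -
  have "\<forall>i<d. \<forall>j<d. uu x a i j = 0 \<or> vv y b i j = 0"
  proof (intro allI impI)
    fix i j assume ij: "i < d" "j < d"
    show "uu x a i j = 0 \<or> vv y b i j = 0"
    proof (cases "nU x a = 0")
      case True
      have "(\<Sum>j<d. (cmod (uu x a i j))\<^sup>2) = 0"
        using True unfolding nU_def by (subst (asm) sum_nonneg_eq_0_iff) (auto intro: sum_nonneg ij)
      then show ?thesis using ij by (subst (asm) sum_nonneg_eq_0_iff) auto
    next
      case False
      then have nv0: "nV y b = 0" using assms by simp
      have "(\<Sum>j<d. (cmod (vv y b i j))\<^sup>2) = 0"
        using nv0 unfolding nV_def by (subst (asm) sum_nonneg_eq_0_iff) (auto intro: sum_nonneg ij)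
      then show ?thesis using ij by (subst (asm) sum_nonneg_eq_0_iff) auto
    qed
  qed
  then show ?thesis unfolding te_uuvv by (intro sum.neutral ballI) auto
qed


lemma part2:
  assumes K: "groth_ineq_C K"
  shows "cmod (\<Sum>x\<in>UNIV. \<Sum>y\<in>UNIV. \<Sum>a\<in>UNIV. \<Sum>b\<in>UNIV. complex_of_real (G x y a b) * tensor_expect d psi (A x a) (B y b))
     \<le> K * (sqrt (real (CARD('a) * CARD('b))) * classical_value G)"
proof -
  define al where "al = (\<lambda>x a. sqrt (nU x a))"
  define be where "be = (\<lambda>y b. sqrt (nV y b))"
  define n where "n = CARD('x \<times> 'a)"
  define m where "m = CARD('y \<times> 'b)"
  define D where "D = card ({..<d} \<times> {..<d})"
  have "\<exists>e. bij_betw e {..<n} (UNIV :: ('x \<times> 'a) set)" unfolding n_def by (rule enum_ex) simp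
  then obtain ex where ex: "bij_betw ex {..<n} (UNIV :: ('x \<times> 'a) set)" by blast
  have "\<exists>e. bij_betw e {..<m} (UNIV :: ('y \<times> 'b) set)" unfolding m_def by (rule enum_ex) simp
  then obtain ey where ey: "bij_betw ey {..<m} (UNIV :: ('y \<times> 'b) set)" by blast
  have "\<exists>e. bij_betw e {..<D} ({..<d} \<times> {..<d})" unfolding D_def by (rule enum_ex) simp
  then obtain eD where eD: "bij_betw eD {..<D} ({..<d} \<times> {..<d})" by blast
  have rx: "\<And>f. (\<Sum>k<n. f (ex k)) = (\<Sum>x\<in>UNIV. \<Sum>a\<in>UNIV. f (x, a))"
  proof -
    fix f
    have "(\<Sum>k<n. f (ex k)) = (\<Sum>p\<in>UNIV. f p)" by (rule sum.reindex_bij_betw[OF ex])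
    also have "\<dots> = (\<Sum>x\<in>UNIV. \<Sum>a\<in>UNIV. f (x, a))" by (rule sum_pairs_UNIV)
    finally show "(\<Sum>k<n. f (ex k)) = (\<Sum>x\<in>UNIV. \<Sum>a\<in>UNIV. f (x, a))" .
  qed
  have ry: "\<And>f. (\<Sum>k<m. f (ey k)) = (\<Sum>y\<in>UNIV. \<Sum>b\<in>UNIV. f (y, b))"
  proof -
    fix f
    have "(\<Sum>k<m. f (ey k)) = (\<Sum>p\<in>UNIV. f p)" by (rule sum.reindex_bij_betw[OF ey])
    also have "\<dots> = (\<Sum>y\<in>UNIV. \<Sum>b\<in>UNIV. f (y, b))" by (rule sum_pairs_UNIV)
    finally show "(\<Sum>k<m. f (ey k)) = (\<Sum>y\<in>UNIV. \<Sum>b\<in>UNIV. f (y, b))" .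
  qed
  have rD: "\<And>f. (\<Sum>t<D. f (eD t)) = (\<Sum>i<d. \<Sum>j<d. f (i, j))"
  proof -
    fix f
    have "(\<Sum>t<D. f (eD t)) = (\<Sum>p\<in>{..<d} \<times> {..<d}. f p)" by (rule sum.reindex_bij_betw[OF eD])
    also have "\<dots> = (\<Sum>i<d. \<Sum>j<d. f (i, j))" by (rule sum_pairs_lt)
    finally show "(\<Sum>t<D. f (eD t)) = (\<Sum>i<d. \<Sum>j<d. f (i, j))" .
  qed
  define ah where "ah = (\<lambda>k t. cnj (uu (fst (ex k)) (snd (ex k)) (fst (eD t)) (snd (eD t))) / of_real (al (fst (ex k)) (snd (ex k))))"
  define bh where "bh = (\<lambda>k t. vv (fst (ey k)) (snd (ey k)) (fst (eD t)) (snd (eD t)) / of_real (be (fst (ey k)) (snd (ey k))))"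
  define cc where "cc = (\<lambda>k k'. complex_of_real (G (fst (ex k)) (fst (ey k')) (snd (ex k)) (snd (ey k'))
        * al (fst (ex k)) (snd (ex k)) * be (fst (ey k')) (snd (ey k'))))"
  have al2: "\<And>x a. (al x a)\<^sup>2 = nU x a" unfolding al_def using nU_nn by simp
  have be2: "\<And>y b. (be y b)\<^sup>2 = nV y b" unfolding be_def using nV_nn by simp
  have nah: "\<forall>k<n. (\<Sum>t<D. (cmod (ah k t))\<^sup>2) \<le> 1"
  proof (intro allI impI)
    fix k
    obtain x a where xa: "ex k = (x, a)" by (cases "ex k")
    have "(\<Sum>t<D. (cmod (ah k t))\<^sup>2) = (\<Sum>t<D. (cmod (uu x a (fst (eD t)) (snd (eD t))))\<^sup>2) / (al x a)\<^sup>2"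
      unfolding ah_def xa by (simp add: norm_divide power_divide sum_divide_distrib)
    also have "\<dots> = nU x a / nU x a"
      unfolding rD[of "\<lambda>p. (cmod (uu x a (fst p) (snd p)))\<^sup>2"] al2 nU_def by simp
    also have "\<dots> \<le> 1" by simp
    finally show "(\<Sum>t<D. (cmod (ah k t))\<^sup>2) \<le> 1" .
  qed
  have nbh: "\<forall>k<m. (\<Sum>t<D. (cmod (bh k t))\<^sup>2) \<le> 1"
  proof (intro allI impI)
    fix k
    obtain y b where yb: "ey k = (y, b)" by (cases "ey k")
    have "(\<Sum>t<D. (cmod (bh k t))\<^sup>2) = (\<Sum>t<D. (cmod (vv y b (fst (eD t)) (snd (eD t))))\<^sup>2) / (be y b)\<^sup>2"
      unfolding bh_def yb by (simp add: norm_divide power_divide sum_divide_distrib)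
    also have "\<dots> = nV y b / nV y b"
      unfolding rD[of "\<lambda>p. (cmod (vv y b (fst p) (snd p)))\<^sup>2"] be2 nV_def by simp
    also have "\<dots> \<le> 1" by simp
    finally show "(\<Sum>t<D. (cmod (bh k t))\<^sup>2) \<le> 1" .
  qed
  have inner: "cc k k' * (\<Sum>t<D. ah k t * bh k' t)
      = complex_of_real (G (fst (ex k)) (fst (ey k')) (snd (ex k)) (snd (ey k')))
        * tensor_expect d psi (A (fst (ex k)) (snd (ex k))) (B (fst (ey k')) (snd (ey k')))" for k k'
  proof -
    obtain x a where xa: "ex k = (x, a)" by (cases "ex k")
    obtain y b where yb: "ey k' = (y, b)" by (cases "ey k'")
    have s: "(\<Sum>t<D. ah k t * bh k' t) = tensor_expect d psi (A x a) (B y b) / (of_real (al x a) * of_real (be y b))"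
    proof -
      have "(\<Sum>t<D. ah k t * bh k' t) = (\<Sum>t<D. cnj (uu x a (fst (eD t)) (snd (eD t))) * vv y b (fst (eD t)) (snd (eD t))) / (of_real (al x a) * of_real (be y b))"
        unfolding ah_def bh_def xa yb by (simp add: sum_divide_distrib)
      also have "\<dots> = (\<Sum>i<d. \<Sum>j<d. cnj (uu x a i j) * vv y b i j) / (of_real (al x a) * of_real (be y b))"
        using rD[of "\<lambda>p. cnj (uu x a (fst p) (snd p)) * vv y b (fst p) (snd p)"] by simp
      finally show ?thesis unfolding te_uuvv .
    qed
    show ?thesis
    proof (cases "nU x a = 0 \<or> nV y b = 0")
      case True
      then show ?thesis unfolding s xa yb using te_zero[OF True] by simp
    next
      case False
      then have "al x a \<noteq> 0" "be y b \<noteq> 0" unfolding al_def be_def using nU_nn nV_nn by auto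
      then show ?thesis unfolding s cc_def xa yb by simp
    qed
  qed
  have lhs: "(\<Sum>k<n. \<Sum>k'<m. cc k k' * (\<Sum>t<D. ah k t * bh k' t))
      = (\<Sum>x\<in>UNIV. \<Sum>y\<in>UNIV. \<Sum>a\<in>UNIV. \<Sum>b\<in>UNIV. complex_of_real (G x y a b) * tensor_expect d psi (A x a) (B y b))"
  proof -
    have "(\<Sum>k<n. \<Sum>k'<m. cc k k' * (\<Sum>t<D. ah k t * bh k' t))
        = (\<Sum>x\<in>UNIV. \<Sum>a\<in>UNIV. \<Sum>y\<in>UNIV. \<Sum>b\<in>UNIV. complex_of_real (G x y a b) * tensor_expect d psi (A x a) (B y b))"
    proof -
      have i: "\<And>x a. (\<Sum>k'<m. complex_of_real (G x (fst (ey k')) a (snd (ey k'))) * tensor_expect d psi (A x a) (B (fst (ey k')) (snd (ey k'))))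
          = (\<Sum>y\<in>UNIV. \<Sum>b\<in>UNIV. complex_of_real (G x y a b) * tensor_expect d psi (A x a) (B y b))"
      proof -
        fix x a
        show "(\<Sum>k'<m. complex_of_real (G x (fst (ey k')) a (snd (ey k'))) * tensor_expect d psi (A x a) (B (fst (ey k')) (snd (ey k'))))
          = (\<Sum>y\<in>UNIV. \<Sum>b\<in>UNIV. complex_of_real (G x y a b) * tensor_expect d psi (A x a) (B y b))"
          using ry[of "\<lambda>q. complex_of_real (G x (fst q) a (snd q)) * tensor_expect d psi (A x a) (B (fst q) (snd q))"] by simp
      qed
      show ?thesis unfolding inner
        using rx[of "\<lambda>p. \<Sum>k'<m. complex_of_real (G (fst p) (fst (ey k')) (snd p) (snd (ey k'))) * tensor_expect d psi (A (fst p) (snd p)) (B (fst (ey k')) (snd (ey k')))"]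
        unfolding i by simp
    qed
    also have "\<dots> = (\<Sum>x\<in>UNIV. \<Sum>y\<in>UNIV. \<Sum>a\<in>UNIV. \<Sum>b\<in>UNIV. complex_of_real (G x y a b) * tensor_expect d psi (A x a) (B y b))"
      by (rule sum.cong[OF refl], rule sum.swap)
    finally show ?thesis .
  qed
  have cs: "Cs n m cc = (\<Sum>x\<in>UNIV. \<Sum>y\<in>UNIV. \<Sum>a\<in>UNIV. \<Sum>b\<in>UNIV. G x y a b * (al x a * be y b))"
  proof -
    have ccn: "cmod (cc k k') = G (fst (ex k)) (fst (ey k')) (snd (ex k)) (snd (ey k')) * (al (fst (ex k)) (snd (ex k)) * be (fst (ey k')) (snd (ey k')))" for k k'
    proof -
      have "0 \<le> G (fst (ex k)) (fst (ey k')) (snd (ex k)) (snd (ey k')) * al (fst (ex k)) (snd (ex k)) * be (fst (ey k')) (snd (ey k'))"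
        unfolding al_def be_def using Gnn nU_nn nV_nn by (intro mult_nonneg_nonneg real_sqrt_ge_zero) auto
      then show ?thesis unfolding cc_def by (simp only: norm_of_real abs_of_nonneg mult.assoc)
    qed
    have "Cs n m cc = (\<Sum>x\<in>UNIV. \<Sum>a\<in>UNIV. \<Sum>y\<in>UNIV. \<Sum>b\<in>UNIV. G x y a b * (al x a * be y b))"
    proof -
      have i: "\<And>x a. (\<Sum>k'<m. G x (fst (ey k')) a (snd (ey k')) * (al x a * be (fst (ey k')) (snd (ey k'))))
          = (\<Sum>y\<in>UNIV. \<Sum>b\<in>UNIV. G x y a b * (al x a * be y b))"
      proof -
        fix x a
        show "(\<Sum>k'<m. G x (fst (ey k')) a (snd (ey k')) * (al x a * be (fst (ey k')) (snd (ey k'))))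
          = (\<Sum>y\<in>UNIV. \<Sum>b\<in>UNIV. G x y a b * (al x a * be y b))"
          using ry[of "\<lambda>q. G x (fst q) a (snd q) * (al x a * be (fst q) (snd q))"] by simp
      qed
      show ?thesis unfolding Cs_def ccn
        using rx[of "\<lambda>p. \<Sum>k'<m. G (fst p) (fst (ey k')) (snd p) (snd (ey k')) * (al (fst p) (snd p) * be (fst (ey k')) (snd (ey k')))"]
        unfolding i by simp
    qed
    also have "\<dots> = (\<Sum>x\<in>UNIV. \<Sum>y\<in>UNIV. \<Sum>a\<in>UNIV. \<Sum>b\<in>UNIV. G x y a b * (al x a * be y b))"
      by (rule sum.cong[OF refl], rule sum.swap)
    finally show ?thesis .
  qed
  have g: "cmod (\<Sum>k<n. \<Sum>k'<m. cc k k' * (\<Sum>t<D. ah k t * bh k' t)) \<le> K * Sup (Bset n m cc)"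
    using K nah nbh unfolding groth_ineq_C_def Bset_def by blast
  have am: "(\<Sum>x\<in>UNIV. \<Sum>y\<in>UNIV. \<Sum>a\<in>UNIV. \<Sum>b\<in>UNIV. G x y a b * (al x a * be y b))
     \<le> sqrt (real (CARD('a) * CARD('b))) * classical_value G"
    by (rule amgm_cv[OF Gnn]) (auto simp: al_def be_def al2[unfolded al_def] be2[unfolded be_def] nU_sum nV_sum nU_nn nV_nn)
  have K0: "0 \<le> K" by (rule groth_K_nonneg[OF K])
  have "cmod (\<Sum>x\<in>UNIV. \<Sum>y\<in>UNIV. \<Sum>a\<in>UNIV. \<Sum>b\<in>UNIV. complex_of_real (G x y a b) * tensor_expect d psi (A x a) (B y b))
      \<le> K * Sup (Bset n m cc)" using g unfolding lhs .
  also have "\<dots> \<le> K * Cs n m cc" by (rule mult_left_mono[OF Bset_le_Cs K0])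
  also have "\<dots> \<le> K * (sqrt (real (CARD('a) * CARD('b))) * classical_value G)"
    unfolding cs by (rule mult_left_mono[OF am K0])
  finally show ?thesis .
qed

end

lemma cv_nonneg:
  fixes G :: "'x::finite \<Rightarrow> 'y::finite \<Rightarrow> 'a::finite \<Rightarrow> 'b::finite \<Rightarrow> real"
  shows "0 \<le> classical_value G"
proof -
  have c: "(\<lambda>(x::'x) (y::'y) (a::'a) (b::'b). (1 / real CARD('a)) * (1 / real CARD('b))) \<in> classical_corr"
    by (rule prod_corr) (rule unif_dist)+
  have "\<bar>gsum G (\<lambda>(x::'x) (y::'y) (a::'a) (b::'b). (1 / real CARD('a)) * (1 / real CARD('b)))\<bar> \<le> classical_value G"
    unfolding classical_value_def gsum_def[symmetric] by (rule cSup_upper[OF _ cv_bdd]) (use c in auto)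
  then show ?thesis by linarith
qed

lemma qset_ne:
  fixes G :: "'x::finite \<Rightarrow> 'y::finite \<Rightarrow> 'a::finite \<Rightarrow> 'b::finite \<Rightarrow> real"
  shows "{cmod (\<Sum>x\<in>UNIV. \<Sum>y\<in>UNIV. \<Sum>a\<in>UNIV. \<Sum>b\<in>UNIV.
        complex_of_real (G x y a b) * tensor_expect d psi (A x a) (B y b)) | d psi
        (A :: 'x \<Rightarrow> 'a \<Rightarrow> nat \<Rightarrow> nat \<Rightarrow> complex) (B :: 'y \<Rightarrow> 'b \<Rightarrow> nat \<Rightarrow> nat \<Rightarrow> complex).
        unit_bipartite d psi \<and> (\<forall>x. povm d (A x)) \<and> (\<forall>y. povm d (B y))} \<noteq> {}"
proof -
  define A :: "'x \<Rightarrow> 'a \<Rightarrow> nat \<Rightarrow> nat \<Rightarrow> complex" where "A = (\<lambda>x a i j. if a = undefined then 1 else 0)"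
  define B :: "'y \<Rightarrow> 'b \<Rightarrow> nat \<Rightarrow> nat \<Rightarrow> complex" where "B = (\<lambda>y b i j. if b = undefined then 1 else 0)"
  define psi :: "nat \<Rightarrow> nat \<Rightarrow> complex" where "psi = (\<lambda>i j. 1)"
  have psd1: "psd 1 (\<lambda>i j. if c then 1 else 0)" for c
    unfolding psd_def by (simp add: mult_cnj2)
  have pA: "\<forall>x. povm 1 (A x)" unfolding povm_def A_def using psd1 by auto
  have pB: "\<forall>y. povm 1 (B y)" unfolding povm_def B_def using psd1 by auto
  have u: "unit_bipartite 1 psi" unfolding unit_bipartite_def psi_def by simp
  show ?thesis using pA pB u by blast
qed

theorem mainTheorem4:
  fixes \<pi> :: "'x::finite \<Rightarrow> 'y::finite \<Rightarrow> real"
    and V :: "'a::finite \<Rightarrow> 'b::finite \<Rightarrow> 'x \<Rightarrow> 'y \<Rightarrow> real"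
  assumes nonneg: "\<forall>x y a b. 0 \<le> \<pi> x y * V a b x y"
  shows "quantum_value (\<lambda>x y a b. \<pi> x y * V a b x y)
           \<le> real (min CARD('x) CARD('y)) * classical_value (\<lambda>x y a b. \<pi> x y * V a b x y)
         \<and> quantum_value (\<lambda>x y a b. \<pi> x y * V a b x y)
           \<le> grothendieck_C * sqrt (real (CARD('a) * CARD('b)))
               * classical_value (\<lambda>x y a b. \<pi> x y * V a b x y)"
proof -
  define G where "G = (\<lambda>x y a b. \<pi> x y * V a b x y)"
  have Gnn: "\<forall>x y a b. 0 \<le> G x y a b" unfolding G_def using nonneg by simp
  define QS where "QS = {cmod (\<Sum>x\<in>UNIV. \<Sum>y\<in>UNIV. \<Sum>a\<in>UNIV. \<Sum>b\<in>UNIV.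
        complex_of_real (G x y a b) * tensor_expect d psi (A x a) (B y b)) | d psi
        (A :: 'x \<Rightarrow> 'a \<Rightarrow> nat \<Rightarrow> nat \<Rightarrow> complex) (B :: 'y \<Rightarrow> 'b \<Rightarrow> nat \<Rightarrow> nat \<Rightarrow> complex).
        unit_bipartite d psi \<and> (\<forall>x. povm d (A x)) \<and> (\<forall>y. povm d (B y))}"
  have qv: "quantum_value G = Sup QS" unfolding quantum_value_def QS_def ..
  have ne: "QS \<noteq> {}" unfolding QS_def by (rule qset_ne)
  have elem: "\<And>z. z \<in> QS \<Longrightarrow> \<exists>d psi (A :: 'x \<Rightarrow> 'a \<Rightarrow> nat \<Rightarrow> nat \<Rightarrow> complex) (B :: 'y \<Rightarrow> 'b \<Rightarrow> nat \<Rightarrow> nat \<Rightarrow> complex).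
      z = cmod (\<Sum>x\<in>UNIV. \<Sum>y\<in>UNIV. \<Sum>a\<in>UNIV. \<Sum>b\<in>UNIV. complex_of_real (G x y a b) * tensor_expect d psi (A x a) (B y b))
      \<and> unit_bipartite d psi \<and> (\<forall>x. povm d (A x)) \<and> (\<forall>y. povm d (B y))"
    unfolding QS_def by blast
  have p1: "quantum_value G \<le> real (min CARD('x) CARD('y)) * classical_value G"
    unfolding qv
  proof (rule cSup_least[OF ne])
    fix z assume "z \<in> QS"
    then obtain d psi and A :: "'x \<Rightarrow> 'a \<Rightarrow> nat \<Rightarrow> nat \<Rightarrow> complex" and B :: "'y \<Rightarrow> 'b \<Rightarrow> nat \<Rightarrow> nat \<Rightarrow> complex"
      where z: "z = cmod (\<Sum>x\<in>UNIV. \<Sum>y\<in>UNIV. \<Sum>a\<in>UNIV. \<Sum>b\<in>UNIV. complex_of_real (G x y a b) * tensor_expect d psi (A x a) (B y b))"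
        and h: "unit_bipartite d psi" "\<forall>x. povm d (A x)" "\<forall>y. povm d (B y)"
      using elem by blast
    have "z \<le> real CARD('x) * classical_value G" "z \<le> real CARD('y) * classical_value G"
      unfolding z qsum_eq[OF Gnn h] using part1x[OF Gnn h] part1y[OF Gnn h] by auto
    then show "z \<le> real (min CARD('x) CARD('y)) * classical_value G"
      by (cases "CARD('x) \<le> CARD('y)") (auto simp: min_def)
  qed
  have pK: "quantum_value G \<le> K * (sqrt (real (CARD('a) * CARD('b))) * classical_value G)" if K: "groth_ineq_C K" for K
    unfolding qv
  proof (rule cSup_least[OF ne])
    fix z assume "z \<in> QS"
    then obtain d psi and A :: "'x \<Rightarrow> 'a \<Rightarrow> nat \<Rightarrow> nat \<Rightarrow> complex" and B :: "'y \<Rightarrow> 'b \<Rightarrow> nat \<Rightarrow> nat \<Rightarrow> complex"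
      where z: "z = cmod (\<Sum>x\<in>UNIV. \<Sum>y\<in>UNIV. \<Sum>a\<in>UNIV. \<Sum>b\<in>UNIV. complex_of_real (G x y a b) * tensor_expect d psi (A x a) (B y b))"
        and h: "unit_bipartite d psi" "\<forall>x. povm d (A x)" "\<forall>y. povm d (B y)"
      using elem by blast
    show "z \<le> K * (sqrt (real (CARD('a) * CARD('b))) * classical_value G)"
      unfolding z by (rule part2[OF Gnn h K])
  qed
  define c where "c = sqrt (real (CARD('a) * CARD('b))) * classical_value G"
  have c0: "0 \<le> c" unfolding c_def using cv_nonneg[of G] by simp
  have Sne: "{K. groth_ineq_C K} \<noteq> {}" using groth_exists by blast
  have p2: "quantum_value G \<le> grothendieck_C * c"
  proof (cases "c = 0")
    case True
    then show ?thesis using pK[OF groth_exists] unfolding c_def by simp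
  next
    case False
    then have cp: "c > 0" using c0 by simp
    have "quantum_value G / c \<le> Inf {K. groth_ineq_C K}"
    proof (rule cInf_greatest[OF Sne])
      fix K assume "K \<in> {K. groth_ineq_C K}"
      then have "quantum_value G \<le> K * c" using pK unfolding c_def by blast
      then show "quantum_value G / c \<le> K" using cp by (simp add: divide_le_eq)
    qed
    then show ?thesis unfolding grothendieck_C_def using cp by (simp add: divide_le_eq mult.commute)
  qed
  show ?thesis using p1 p2 unfolding G_def[symmetric] c_def by (simp add: mult.assoc)
qed

end
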